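(* For every $n\ge1$, $\mathsf{COH}$ admits $n$-fairness preservation. That is, for all $A_0,A_1\subseteq 2^{<\omega}$, every set $C$ that is $n$-fair for $A_0,A_1$, and every uniformly $C$-computable sequence of sets $R_0,R_1,\dots$, there is an $\vec R$-cohesive set $G$ such that $G\oplus C$ is $n$-fair for $A_0,A_1$.
   Context: An infinite set $G$ is $\vec R$-cohesive for a sequence $R_0,R_1,\dots$ if for each $i$, either $G\subseteq^* R_i$ or $G\subseteq^*\overline{R_i}$, where $\subseteq^*$ means inclusion up to finitely many elements. $\mathsf{COH}$ is the statement that every uniform sequence of sets has a cohesive set. Strings are finite binary strings, and $\preceq$ is the prefix relation. Two strings are incomparable if neither is a prefix of the other. Matrices. An $m$-by-$n$ matrix $M$ is an array of strings $\sigma_{i,j}$ ($i<m$, $j<n$), with rows $M(i)=(\sigma_{i,0},\dots,\sigma_{i,n-1})$. It is disjoint if each row consists of pairwise incomparable strings. Formulas. An $m$-by-$n$ formula is a formula with distinguished finite-set variables $U_{i,j}$. It is $\Sigma^{0,X}_1$ if it is $\Sigma^0_1$ relative to $X$. Valuations. An $M$-valuation is a tuple $V=(B_{i,j})$ of finite sets $B_{i,j}\subseteq\{\tau:\tau\succeq\sigma_{i,j}\}$. We write $\varphi(V)$ for $\varphi$ evaluated at $U_{i,j}:=B_{i,j}$, and $V(i)=(B_{i,0},\dots,B_{i,n-1})$. We write $V>s$ if all strings occurring in $V$ have length $>s$. Essential. $\varphi$ is essential in $M$ if for every $s$ there is an $M$-valuation $V>s$ with $\varphi(V)$. Diagonalization.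 An $M$-valuation $V$ diagonalizes against $A_0,A_1$ if for every $i<m$ there are components $L,R$ of $V(i)$ with $L\subseteq A_0$ and $R\subseteq A_1$. Fairness. For $n\ge1$, a set $X$ is $n$-fair for $A_0,A_1$ if the following holds: for every $m$, every $\Sigma^{0,X}_1$ $m$-by-$2^nm$ formula $\varphi$, and every $m$-by-$2^nm$ disjoint matrix $M$ in which $\varphi$ is essential, there is an $M$-valuation $V$ diagonalizing against $A_0,A_1$ with $\varphi(V)$. *)

theory Defs
  imports Main "HOL-Library.Nat_Bijection" "HOL-Library.Sublist"
begin

fun prec_aux :: "(nat list \<Rightarrow> nat option) \<Rightarrow> (nat list \<Rightarrow> nat option) \<Rightarrow> nat \<Rightarrow> nat list \<Rightarrow> nat option" where
  "prec_aux g h 0 xs = g xs"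
| "prec_aux g h (Suc n) xs = (case prec_aux g h n xs of None \<Rightarrow> None | Some r \<Rightarrow> h (n # r # xs))"

definition mu_op :: "(nat list \<Rightarrow> nat option) \<Rightarrow> nat list \<Rightarrow> nat option" where
  "mu_op f xs = (if \<exists>n. f (n # xs) = Some 0 \<and> (\<forall>m<n. f (m # xs) \<noteq> None)
                 then Some (LEAST n. f (n # xs) = Some 0 \<and> (\<forall>m<n. f (m # xs) \<noteq> None))
                 else None)"

text \<open>recfn X k f: f is a k-ary partial recursive function with oracle X
 (only its values on argument lists of length k matter).\<close>
inductive recfn :: "nat set \<Rightarrow> nat \<Rightarrow> (nat list \<Rightarrow> nat option) \<Rightarrow> bool" for X :: "nat set" where
  zero: "recfn X k (\<lambda>xs. Some 0)"
| succ: "recfn X 1 (\<lambda>xs. Some (Suc (hd xs)))"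
| proj: "i < k \<Longrightarrow> recfn X k (\<lambda>xs. Some (xs ! i))"
| orac: "recfn X 1 (\<lambda>xs. Some (if hd xs \<in> X then 1 else 0))"
| compose: "recfn X m g \<Longrightarrow> length fs = m \<Longrightarrow> (\<forall>f\<in>set fs. recfn X k f) \<Longrightarrow>
     recfn X k (\<lambda>xs. if (\<forall>f\<in>set fs. f xs \<noteq> None) then g (map (\<lambda>f. the (f xs)) fs) else None)"
| prim_rec: "recfn X k g \<Longrightarrow> recfn X (Suc (Suc k)) h \<Longrightarrow>
     recfn X (Suc k) (\<lambda>ys. prec_aux g h (hd ys) (tl ys))"
| mu: "recfn X (Suc k) f \<Longrightarrow> recfn X k (mu_op f)"

definition ce_in :: "nat set \<Rightarrow> nat set \<Rightarrow> bool" where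
  "ce_in X W \<longleftrightarrow> (\<exists>f. recfn X 1 f \<and> (\<forall>x. x \<in> W \<longleftrightarrow> f [x] \<noteq> None))"

definition unif_computable :: "nat set \<Rightarrow> (nat \<Rightarrow> nat set) \<Rightarrow> bool" where
  "unif_computable X R \<longleftrightarrow>
     (\<exists>f. recfn X 2 f \<and> (\<forall>i x. f [i, x] = Some (if x \<in> R i then 1 else 0)))"

definition join :: "nat set \<Rightarrow> nat set \<Rightarrow> nat set" where
  "join G C = {2 * x | x. x \<in> G} \<union> {2 * x + 1 | x. x \<in> C}"

definition cohesive :: "(nat \<Rightarrow> nat set) \<Rightarrow> nat set \<Rightarrow> bool" where
  "cohesive R G \<longleftrightarrow> infinite G \<and> (\<forall>i. finite (G - R i) \<or> finite (G - (- R i)))"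

type_synonym str = "bool list"

fun str_code :: "str \<Rightarrow> nat" where
  "str_code [] = 0"
| "str_code (b # s) = 2 * str_code s + (if b then 2 else 1)"

text \<open>An m-by-N matrix is M :: nat => nat => str (entries i<m, j<N);
 an M-valuation V :: nat => nat => str set likewise.\<close>

definition incomparable :: "str \<Rightarrow> str \<Rightarrow> bool" where
  "incomparable s t \<longleftrightarrow> \<not> prefix s t \<and> \<not> prefix t s"

definition disjoint_matrix :: "nat \<Rightarrow> nat \<Rightarrow> (nat \<Rightarrow> nat \<Rightarrow> str) \<Rightarrow> bool" where
  "disjoint_matrix m N M \<longleftrightarrow>
     (\<forall>i<m. \<forall>j<N. \<forall>k<N. j \<noteq> k \<longrightarrow> incomparable (M i j) (M i k))"

definition is_valuation :: "nat \<Rightarrow> nat \<Rightarrow> (nat \<Rightarrow> nat \<Rightarrow> str) \<Rightarrow> (nat \<Rightarrow> nat \<Rightarrow> str set) \<Rightarrow> bool" where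
  "is_valuation m N M V \<longleftrightarrow>
     (\<forall>i<m. \<forall>j<N. finite (V i j) \<and> (\<forall>\<tau>\<in>V i j. prefix (M i j) \<tau>))"

definition val_gt :: "nat \<Rightarrow> nat \<Rightarrow> (nat \<Rightarrow> nat \<Rightarrow> str set) \<Rightarrow> nat \<Rightarrow> bool" where
  "val_gt m N V s \<longleftrightarrow> (\<forall>i<m. \<forall>j<N. \<forall>\<tau>\<in>V i j. s < length \<tau>)"

definition val_code :: "nat \<Rightarrow> nat \<Rightarrow> (nat \<Rightarrow> nat \<Rightarrow> str set) \<Rightarrow> nat" where
  "val_code m N V =
     list_encode (map (\<lambda>i. list_encode (map (\<lambda>j. set_encode (str_code ` V i j)) [0..<N])) [0..<m])"

text \<open>An m-by-N formula phi (identified with its meaning, a predicate on tuples of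
 finite sets U_ij) is Sigma^0_1 relative to X: the set of codes of satisfying
 tuples is X-c.e.\<close>
definition sigma1_formula :: "nat set \<Rightarrow> nat \<Rightarrow> nat \<Rightarrow> ((nat \<Rightarrow> nat \<Rightarrow> str set) \<Rightarrow> bool) \<Rightarrow> bool" where
  "sigma1_formula X m N \<phi> \<longleftrightarrow>
     (\<exists>W. ce_in X W \<and>
        (\<forall>V. (\<forall>i<m. \<forall>j<N. finite (V i j)) \<longrightarrow> (\<phi> V \<longleftrightarrow> val_code m N V \<in> W)))"

definition essential :: "nat \<Rightarrow> nat \<Rightarrow> ((nat \<Rightarrow> nat \<Rightarrow> str set) \<Rightarrow> bool) \<Rightarrow> (nat \<Rightarrow> nat \<Rightarrow> str) \<Rightarrow> bool" where
  "essential m N \<phi> M \<longleftrightarrow> (\<forall>s. \<exists>V. is_valuation m N M V \<and> val_gt m N V s \<and> \<phi> V)"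

definition diagonalizes :: "nat \<Rightarrow> nat \<Rightarrow> (nat \<Rightarrow> nat \<Rightarrow> str set) \<Rightarrow> str set \<Rightarrow> str set \<Rightarrow> bool" where
  "diagonalizes m N V A0 A1 \<longleftrightarrow> (\<forall>i<m. \<exists>j<N. \<exists>k<N. V i j \<subseteq> A0 \<and> V i k \<subseteq> A1)"

definition fair :: "nat \<Rightarrow> nat set \<Rightarrow> str set \<Rightarrow> str set \<Rightarrow> bool" where
  "fair n X A0 A1 \<longleftrightarrow>
     (\<forall>m \<phi> M. sigma1_formula X m (2 ^ n * m) \<phi> \<longrightarrow> disjoint_matrix m (2 ^ n * m) M \<longrightarrow>
        essential m (2 ^ n * m) \<phi> M \<longrightarrow>
        (\<exists>V. is_valuation m (2 ^ n * m) M V \<and> diagonalizes m (2 ^ n * m) V A0 A1 \<and> \<phi> V))"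

end

theory Submission
  imports Defs "HOL-Library.Countable"
begin


definition rf :: "nat set \<Rightarrow> nat \<Rightarrow> (nat list \<Rightarrow> nat option) \<Rightarrow> bool" where
  "rf X k f \<longleftrightarrow> (\<exists>g. recfn X k g \<and> (\<forall>xs. length xs = k \<longrightarrow> g xs = f xs))"

definition tot :: "nat set \<Rightarrow> nat \<Rightarrow> (nat list \<Rightarrow> nat) \<Rightarrow> bool" where
  "tot X k f \<longleftrightarrow> rf X k (\<lambda>xs. Some (f xs))"

lemma rf_cong: "rf X k f \<Longrightarrow> (\<And>xs. length xs = k \<Longrightarrow> f xs = f' xs) \<Longrightarrow> rf X k f'"
  unfolding rf_def by metis

lemma tot_cong: "tot X k f \<Longrightarrow> (\<And>xs. length xs = k \<Longrightarrow> f xs = f' xs) \<Longrightarrow> tot X k f'"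
  unfolding tot_def by (erule rf_cong) simp

lemma tot_const0: "tot X k (\<lambda>xs. 0)"
  unfolding tot_def rf_def using recfn.zero by blast

lemma tot_proj: "i < k \<Longrightarrow> tot X k (\<lambda>xs. xs ! i)"
  unfolding tot_def rf_def using recfn.proj by blast

lemma tot_succ1: "tot X 1 (\<lambda>xs. Suc (xs ! 0))"
  unfolding tot_def rf_def
  by (rule exI[of _ "\<lambda>xs. Some (Suc (hd xs))"]) (use recfn.succ[of X] in \<open>auto simp: length_Suc_conv\<close>)

lemma tot_orac1: "tot X 1 (\<lambda>xs. if xs ! 0 \<in> X then 1 else 0)"
  unfolding tot_def rf_def
  by (rule exI[of _ "\<lambda>xs. Some (if hd xs \<in> X then 1 else 0)"]) (use recfn.orac[of X] in \<open>auto simp: length_Suc_conv\<close>)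

lemma rf_comp:
  assumes g: "rf X m g" and len: "length fs = m" and fs: "\<forall>f\<in>set fs. rf X k f"
  shows "rf X k (\<lambda>xs. if (\<forall>f\<in>set fs. f xs \<noteq> None) then g (map (\<lambda>f. the (f xs)) fs) else None)"
proof -
  obtain g' where g': "recfn X m g'" "\<And>ys. length ys = m \<Longrightarrow> g' ys = g ys" using g unfolding rf_def by blast
  have "\<exists>fs'. length fs' = length fs \<and> (\<forall>f\<in>set fs'. recfn X k f) \<and>
          (\<forall>i<length fs. \<forall>xs. length xs = k \<longrightarrow> (fs' ! i) xs = (fs ! i) xs)"
    using fs
  proof (induction fs)
    case Nil then show ?case by simp
  next
    case (Cons f fs)
    then obtain fs' where a: "length fs' = length fs" "\<forall>f\<in>set fs'. recfn X k f"
          "\<forall>i<length fs. \<forall>xs. length xs = k \<longrightarrow> (fs' ! i) xs = (fs ! i) xs" by auto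
    obtain f' where b: "recfn X k f'" "\<forall>xs. length xs = k \<longrightarrow> f' xs = f xs" using Cons.prems unfolding rf_def by auto
    show ?case using a b by (intro exI[of _ "f' # fs'"]) (auto simp: nth_Cons split: nat.splits)
  qed
  then obtain fs' where fs': "length fs' = length fs" "\<forall>f\<in>set fs'. recfn X k f"
          "\<forall>i<length fs. \<forall>xs. length xs = k \<longrightarrow> (fs' ! i) xs = (fs ! i) xs" by blast
  have r: "recfn X k (\<lambda>xs. if (\<forall>f\<in>set fs'. f xs \<noteq> None) then g' (map (\<lambda>f. the (f xs)) fs') else None)"
    using recfn.compose[OF g'(1) _ fs'(2)] fs'(1) len by simp
  show ?thesis unfolding rf_def
  proof (intro exI conjI allI impI, rule r)
    fix xs :: "nat list" assume k: "length xs = k"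
    have e1: "map (\<lambda>f. the (f xs)) fs' = map (\<lambda>f. the (f xs)) fs"
      using fs' k by (intro nth_equalityI) auto
    have e2: "(\<forall>f\<in>set fs'. f xs \<noteq> None) = (\<forall>f\<in>set fs. f xs \<noteq> None)"
    proof
      assume H: "\<forall>f\<in>set fs'. f xs \<noteq> None"
      show "\<forall>f\<in>set fs. f xs \<noteq> None"
      proof
        fix f assume "f \<in> set fs"
        then obtain i where "i < length fs" "f = fs ! i" by (auto simp: in_set_conv_nth)
        then show "f xs \<noteq> None" using H fs' k by (metis nth_mem)
      qed
    next
      assume H: "\<forall>f\<in>set fs. f xs \<noteq> None"
      show "\<forall>f\<in>set fs'. f xs \<noteq> None"
      proof
        fix f assume "f \<in> set fs'"
        then obtain i where "i < length fs'" "f = fs' ! i" by (auto simp: in_set_conv_nth)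
        then show "f xs \<noteq> None" using H fs' k by (metis nth_mem)
      qed
    qed
    show "(if \<forall>f\<in>set fs'. f xs \<noteq> None then g' (map (\<lambda>f. the (f xs)) fs') else None) =
          (if \<forall>f\<in>set fs. f xs \<noteq> None then g (map (\<lambda>f. the (f xs)) fs) else None)"
      using e1 e2 g'(2) len by (cases "\<forall>f\<in>set fs. f xs \<noteq> None") auto
  qed
qed

lemma tot_comp:
  assumes g: "tot X m g" and len: "length fs = m" and fs: "\<forall>f\<in>set fs. tot X k f"
  shows "tot X k (\<lambda>xs. g (map (\<lambda>f. f xs) fs))"
proof -
  have "rf X k (\<lambda>xs. if (\<forall>f\<in>set (map (\<lambda>f xs. Some (f xs)) fs). f xs \<noteq> None)
        then (\<lambda>xs. Some (g xs)) (map (\<lambda>f. the (f xs)) (map (\<lambda>f xs. Some (f xs)) fs)) else None)"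
    using g fs len unfolding tot_def by (intro rf_comp) auto
  then show ?thesis unfolding tot_def
  proof (rule rf_cong)
    fix xs :: "nat list"
    have "map (\<lambda>f. the (f xs)) (map (\<lambda>f xs. Some (f xs)) fs) = map (\<lambda>f. f xs) fs"
      by (induction fs) auto
    moreover have "\<forall>f\<in>set (map (\<lambda>f xs. Some (f xs)) fs). f xs \<noteq> None" by auto
    ultimately show "(if \<forall>f\<in>set (map (\<lambda>f xs. Some (f xs)) fs). f xs \<noteq> None
        then (\<lambda>xs. Some (g xs)) (map (\<lambda>f. the (f xs)) (map (\<lambda>f xs. Some (f xs)) fs)) else None) =
       Some (g (map (\<lambda>f. f xs) fs))"
      apply (subst if_P) apply assumption by (simp add: comp_def)
  qed
qed

fun nrec :: "(nat list \<Rightarrow> nat) \<Rightarrow> (nat list \<Rightarrow> nat) \<Rightarrow> nat \<Rightarrow> nat list \<Rightarrow> nat" where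
  "nrec g h 0 xs = g xs"
| "nrec g h (Suc n) xs = h (n # nrec g h n xs # xs)"

lemma tot_prec:
  assumes g: "tot X k g" and h: "tot X (Suc (Suc k)) h"
  shows "tot X (Suc k) (\<lambda>ys. nrec g h (hd ys) (tl ys))"
proof -
  obtain g' where g': "recfn X k g'" "\<And>ys. length ys = k \<Longrightarrow> g' ys = Some (g ys)" using g unfolding tot_def rf_def by blast
  obtain h' where h': "recfn X (Suc (Suc k)) h'" "\<And>ys. length ys = Suc (Suc k) \<Longrightarrow> h' ys = Some (h ys)" using h unfolding tot_def rf_def by blast
  have eq: "length xs = k \<Longrightarrow> prec_aux g' h' n xs = Some (nrec g h n xs)" for n xs
    by (induction n) (auto simp: g' h')
  show ?thesis unfolding tot_def rf_def
    apply (rule exI[of _ "\<lambda>ys. prec_aux g' h' (hd ys) (tl ys)"])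
    apply (intro conjI allI impI recfn.prim_rec g' h')
    apply (rule eq) by simp
qed

lemma tot_comp_list:
  assumes g: "tot X m g" and len: "length fs = m" and fs: "\<And>f. f \<in> set fs \<Longrightarrow> tot X k f"
    and eq: "\<And>xs. length xs = k \<Longrightarrow> F xs = g (map (\<lambda>f. f xs) fs)"
  shows "tot X k F"
proof -
  have "tot X k (\<lambda>xs. g (map (\<lambda>f. f xs) fs))" by (rule tot_comp[OF g len]) (use fs in auto)
  then show ?thesis by (rule tot_cong) (simp add: eq)
qed

lemma tot_comp1: "tot X 1 g \<Longrightarrow> tot X k f \<Longrightarrow> tot X k (\<lambda>xs. g [f xs])"
  by (rule tot_comp_list[where fs="[f]"], assumption) auto

lemma tot_comp2: "tot X 2 g \<Longrightarrow> tot X k f1 \<Longrightarrow> tot X k f2 \<Longrightarrow> tot X k (\<lambda>xs. g [f1 xs, f2 xs])"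
  by (rule tot_comp_list[where fs="[f1,f2]"], assumption) auto

lemma tot_rec_gen:
  assumes a: "tot X k a" and g: "tot X k g" and h: "tot X (Suc (Suc k)) h"
  shows "tot X k (\<lambda>xs. nrec g h (a xs) xs)"
proof -
  have p: "tot X (Suc k) (\<lambda>ys. nrec g h (hd ys) (tl ys))" by (rule tot_prec[OF g h])
  show ?thesis
  proof (rule tot_comp_list[OF p, where fs = "a # map (\<lambda>i xs. xs ! i) [0..<k]"])
    show "f \<in> set (a # map (\<lambda>i xs. xs ! i) [0..<k]) \<Longrightarrow> tot X k f" for f
      using a tot_proj by auto
    fix xs :: "nat list" assume "length xs = k"
    then have "map (\<lambda>i. xs ! i) [0..<k] = xs" using map_nth[of xs] by simp
    then show "nrec g h (a xs) xs = nrec g h (hd (map (\<lambda>f. f xs) (a # map (\<lambda>i xs. xs ! i) [0..<k])))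
         (tl (map (\<lambda>f. f xs) (a # map (\<lambda>i xs. xs ! i) [0..<k])))"
      by (simp add: comp_def)
  qed simp
qed



lemma tot_const: "tot X k (\<lambda>xs. c)"
proof (induction c)
  case 0 show ?case by (rule tot_const0)
next
  case (Suc c)
  have "tot X k (\<lambda>xs. (\<lambda>ys. Suc (ys ! 0)) [c])" by (rule tot_comp1[OF tot_succ1 Suc])
  then show ?case by simp
qed

lemma tot_binop:
  assumes op: "tot X 2 (\<lambda>xs. op (xs ! 0) (xs ! 1))" and f: "tot X k f" and g: "tot X k g"
  shows "tot X k (\<lambda>xs. op (f xs) (g xs))"
  using tot_comp2[OF op f g] by simp

lemma tot_unop:
  assumes op: "tot X 1 (\<lambda>xs. op (xs ! 0))" and f: "tot X k f"
  shows "tot X k (\<lambda>xs. op (f xs))"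
  using tot_comp1[OF op f] by simp

lemma tot_rec2:
  assumes a: "tot X k a" and g: "tot X k g" and h: "tot X (Suc (Suc k)) h"
    and eq: "\<And>xs. length xs = k \<Longrightarrow> F xs = nrec g h (a xs) xs"
  shows "tot X k F"
  using tot_rec_gen[OF a g h] by (rule tot_cong) (simp add: eq)

lemma nrec_add: "nrec (\<lambda>xs. xs!1) (\<lambda>ys. Suc (ys!1)) n xs = n + xs!1" by (induction n) auto

lemma tot_add2: "tot X 2 (\<lambda>xs. xs ! 0 + xs ! 1)"
  apply (rule tot_rec2[where a="\<lambda>xs. xs!0" and g="\<lambda>xs. xs!1" and h="\<lambda>ys. Suc (ys!1)"])
     apply (rule tot_proj, simp)
    apply (rule tot_proj, simp)
   apply (rule tot_unop[OF tot_succ1 tot_proj], simp)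
  by (simp only: nrec_add)

lemma tot_add: "tot X k f \<Longrightarrow> tot X k g \<Longrightarrow> tot X k (\<lambda>xs. f xs + g xs)"
  by (rule tot_binop[OF tot_add2])

lemma nrec_mult: "nrec (\<lambda>xs. 0) (\<lambda>ys. ys!1 + ys!3) n xs = n * xs!1" by (induction n) auto

lemma tot_mult2: "tot X 2 (\<lambda>xs. xs ! 0 * xs ! 1)"
  apply (rule tot_rec2[where a="\<lambda>xs. xs!0" and g="\<lambda>xs. 0" and h="\<lambda>ys. ys!1 + ys!3"])
     apply (rule tot_proj, simp)
    apply (rule tot_const)
   apply (rule tot_add; rule tot_proj; simp)
  by (simp only: nrec_mult)

lemma tot_mult: "tot X k f \<Longrightarrow> tot X k g \<Longrightarrow> tot X k (\<lambda>xs. f xs * g xs)"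
  by (rule tot_binop[OF tot_mult2])

lemma nrec_pred: "nrec (\<lambda>xs. 0) (\<lambda>ys. ys!0) n xs = n - 1" by (induction n) auto

lemma tot_pred1: "tot X 1 (\<lambda>xs. xs ! 0 - 1)"
  apply (rule tot_rec2[where a="\<lambda>xs. xs!0" and g="\<lambda>xs. 0" and h="\<lambda>ys. ys!0"])
     apply (rule tot_proj, simp)
    apply (rule tot_const)
   apply (rule tot_proj; simp)
  by (simp only: nrec_pred)

lemma nrec_monus: "nrec (\<lambda>xs. xs!0) (\<lambda>ys. ys!1 - 1) n xs = xs!0 - n" by (induction n) auto

lemma tot_monus2: "tot X 2 (\<lambda>xs. xs ! 0 - xs ! 1)"
  apply (rule tot_rec2[where a="\<lambda>xs. xs!1" and g="\<lambda>xs. xs!0" and h="\<lambda>ys. ys!1 - 1"])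
     apply (rule tot_proj, simp)
    apply (rule tot_proj, simp)
   apply (rule tot_unop[OF tot_pred1 tot_proj], simp)
  by (simp only: nrec_monus)

lemma tot_monus: "tot X k f \<Longrightarrow> tot X k g \<Longrightarrow> tot X k (\<lambda>xs. f xs - g xs)"
  by (rule tot_binop[OF tot_monus2])

lemma nrec_mod2: "nrec (\<lambda>xs. 0) (\<lambda>ys. 1 - ys!1) n xs = n mod 2"
  by (induction n) (auto simp: mod_Suc)

lemma tot_mod2_1: "tot X 1 (\<lambda>xs. xs ! 0 mod 2)"
  apply (rule tot_rec2[where a="\<lambda>xs. xs!0" and g="\<lambda>xs. 0" and h="\<lambda>ys. 1 - ys!1"])
     apply (rule tot_proj, simp)
    apply (rule tot_const)
   apply (rule tot_monus[OF tot_const tot_proj], simp)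
  by (simp only: nrec_mod2)

lemma tot_mod2: "tot X k f \<Longrightarrow> tot X k (\<lambda>xs. f xs mod 2)"
  by (rule tot_unop[OF tot_mod2_1])

lemma nrec_div2: "nrec (\<lambda>xs. 0) (\<lambda>ys. ys!1 + ys!0 mod 2) n xs = n div 2"
proof (induction n)
  case (Suc n) then show ?case by simp presburger
qed simp

lemma tot_div2_1: "tot X 1 (\<lambda>xs. xs ! 0 div 2)"
  apply (rule tot_rec2[where a="\<lambda>xs. xs!0" and g="\<lambda>xs. 0" and h="\<lambda>ys. ys!1 + ys!0 mod 2"])
     apply (rule tot_proj, simp)
    apply (rule tot_const)
   apply (rule tot_add[OF tot_proj tot_mod2[OF tot_proj]]; simp)
  by (simp only: nrec_div2)

lemma tot_div2: "tot X k f \<Longrightarrow> tot X k (\<lambda>xs. f xs div 2)"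
  by (rule tot_unop[OF tot_div2_1])

lemma nrec_shift: "nrec (\<lambda>xs. xs!1) (\<lambda>ys. ys!1 div 2) n xs = xs!1 div 2 ^ n"
proof (induction n)
  case (Suc n)
  have "xs!1 div 2 ^ n div 2 = xs!1 div (2 ^ n * 2)" by (rule div_mult2_eq[symmetric])
  also have "2 ^ n * 2 = (2::nat) ^ Suc n" by simp
  finally show ?case using Suc by simp
qed simp

lemma tot_shift2: "tot X 2 (\<lambda>xs. xs ! 1 div 2 ^ (xs ! 0))"
  apply (rule tot_rec2[where a="\<lambda>xs. xs!0" and g="\<lambda>xs. xs!1" and h="\<lambda>ys. ys!1 div 2"])
     apply (rule tot_proj, simp)
    apply (rule tot_proj, simp)
   apply (rule tot_div2[OF tot_proj], simp)
  by (simp only: nrec_shift)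

lemma tot_bit: "tot X k fx \<Longrightarrow> tot X k fe \<Longrightarrow> tot X k (\<lambda>xs. if fx xs \<in> set_decode (fe xs) then 1 else 0)"
proof -
  assume a: "tot X k fx" "tot X k fe"
  have "tot X k (\<lambda>xs. (fe xs div 2 ^ (fx xs)) mod 2)"
    using tot_mod2[OF tot_binop[where op="\<lambda>a b. b div 2 ^ a", OF _ a(1) a(2)]] tot_shift2 by simp
  then show ?thesis by (rule tot_cong) (auto simp: set_decode_def odd_iff_mod_2_eq_one)
qed

lemma tot_sg: "tot X k f \<Longrightarrow> tot X k (\<lambda>xs. if f xs = 0 then 0 else 1)"
proof -
  assume "tot X k f"
  then have "tot X k (\<lambda>xs. 1 - (1 - f xs))" by (intro tot_monus tot_const)
  then show ?thesis by (rule tot_cong) auto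
qed

lemma tot_ifz: "tot X k c \<Longrightarrow> tot X k a \<Longrightarrow> tot X k b \<Longrightarrow> tot X k (\<lambda>xs. if c xs = 0 then a xs else b xs)"
proof -
  assume c: "tot X k c" and a: "tot X k a" and b: "tot X k b"
  have "tot X k (\<lambda>xs. (1 - c xs) * a xs + (if c xs = 0 then 0 else 1) * b xs)"
    by (intro tot_add tot_mult tot_monus tot_const tot_sg c a b)
  then show ?thesis by (rule tot_cong) auto
qed



datatype prog = Zer | Sc | Prj nat | Orc | Cmp prog "prog list" | PR prog prog | Mu prog

fun eval :: "prog \<Rightarrow> (nat \<Rightarrow> bool) \<Rightarrow> nat list \<Rightarrow> nat option" where
  "eval Zer Q xs = Some 0"
| "eval Sc Q xs = Some (Suc (hd xs))"
| "eval (Prj i) Q xs = Some (xs ! i)"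
| "eval Orc Q xs = Some (if Q (hd xs) then 1 else 0)"
| "eval (Cmp g fs) Q xs = (if (\<forall>f\<in>set fs. eval f Q xs \<noteq> None)
      then eval g Q (map (\<lambda>f. the (eval f Q xs)) fs) else None)"
| "eval (PR g h) Q ys = prec_aux (eval g Q) (eval h Q) (hd ys) (tl ys)"
| "eval (Mu f) Q xs = mu_op (eval f Q) xs"

inductive pwf :: "nat \<Rightarrow> prog \<Rightarrow> bool" where
  "pwf k Zer"
| "pwf (Suc 0) Sc"
| "i < k \<Longrightarrow> pwf k (Prj i)"
| "pwf (Suc 0) Orc"
| "pwf m g \<Longrightarrow> length fs = m \<Longrightarrow> (\<forall>f\<in>set fs. pwf k f) \<Longrightarrow> pwf k (Cmp g fs)"
| "pwf k g \<Longrightarrow> pwf (Suc (Suc k)) h \<Longrightarrow> pwf (Suc k) (PR g h)"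
| "pwf (Suc k) f \<Longrightarrow> pwf k (Mu f)"

lemma eval_Cmp_fun: "eval (Cmp g fs) Q = (\<lambda>xs. if (\<forall>f\<in>set fs. eval f Q xs \<noteq> None)
      then eval g Q (map (\<lambda>f. the (eval f Q xs)) fs) else None)" by auto

lemma recfn_prog: "recfn X k f \<Longrightarrow> \<exists>p. pwf k p \<and> f = eval p (\<lambda>y. y \<in> X)"
proof (induction rule: recfn.induct)
  case (zero k) then show ?case by (intro exI[of _ Zer]) (auto intro: pwf.intros)
next
  case succ then show ?case by (intro exI[of _ Sc]) (auto intro: pwf.intros)
next
  case (proj i k) then show ?case by (intro exI[of _ "Prj i"]) (auto intro: pwf.intros)
next
  case orac then show ?case by (intro exI[of _ Orc]) (auto intro: pwf.intros)
next
  case (compose m g fs k)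
  obtain pg where pg: "pwf m pg" "g = eval pg (\<lambda>y. y \<in> X)" using compose by blast
  have "\<exists>ps. map (\<lambda>p. eval p (\<lambda>y. y \<in> X)) ps = fs \<and> (\<forall>p\<in>set ps. pwf k p)"
    using compose(4)
  proof (induction fs)
    case Nil then show ?case by simp
  next
    case (Cons f fs)
    then obtain ps where "map (\<lambda>p. eval p (\<lambda>y. y \<in> X)) ps = fs \<and> (\<forall>p\<in>set ps. pwf k p)" by auto
    moreover obtain p where "pwf k p" "f = eval p (\<lambda>y. y \<in> X)" using Cons.prems by auto
    ultimately show ?case by (intro exI[of _ "p # ps"]) auto
  qed
  then obtain ps where ps: "map (\<lambda>p. eval p (\<lambda>y. y \<in> X)) ps = fs" "\<forall>p\<in>set ps. pwf k p" by blast
  show ?case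
  proof (intro exI conjI)
    show "pwf k (Cmp pg ps)" using pg ps compose(2) by (auto intro: pwf.intros)
    show "(\<lambda>xs. if \<forall>f\<in>set fs. f xs \<noteq> None then g (map (\<lambda>f. the (f xs)) fs) else None) =
      eval (Cmp pg ps) (\<lambda>y. y \<in> X)"
      unfolding eval_Cmp_fun ps(1)[symmetric] pg(2) map_map comp_def by simp
  qed
next
  case (prim_rec k g h)
  then obtain pg ph where "pwf k pg" "g = eval pg (\<lambda>y. y \<in> X)" "pwf (Suc (Suc k)) ph" "h = eval ph (\<lambda>y. y \<in> X)" by blast
  then show ?case by (intro exI[of _ "PR pg ph"]) (auto intro: pwf.intros)
next
  case (mu k f)
  then obtain pf where "pwf (Suc k) pf" "f = eval pf (\<lambda>y. y \<in> X)" by blast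
  then show ?case by (intro exI[of _ "Mu pf"]) (auto intro: pwf.intros)
qed

lemma mu_op_intro:
  assumes "f (n # xs) = Some 0" "\<And>m. m < n \<Longrightarrow> \<exists>w. f (m # xs) = Some (Suc w)"
  shows "mu_op f xs = Some n"
proof -
  let ?P = "\<lambda>n. f (n # xs) = Some 0 \<and> (\<forall>m<n. f (m # xs) \<noteq> None)"
  have P: "?P n" using assms by fastforce
  have "(LEAST n. ?P n) = n"
  proof (rule Least_equality[where P="?P", OF P])
    fix y assume "?P y"
    then show "n \<le> y" using assms(2)[of y] by (cases "y < n") auto
  qed
  moreover have "\<exists>n. ?P n" using P by blast
  ultimately show ?thesis unfolding mu_op_def by (simp only: if_True)
qed

lemma mu_op_elim:
  assumes "mu_op f xs = Some n"
  shows "f (n # xs) = Some 0 \<and> (\<forall>m<n. \<exists>w. f (m # xs) = Some (Suc w))"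
proof -
  let ?P = "\<lambda>n. f (n # xs) = Some 0 \<and> (\<forall>m<n. f (m # xs) \<noteq> None)"
  have ex: "\<exists>n. ?P n"
  proof (rule ccontr)
    assume "\<not> (\<exists>n. ?P n)"
    then have "mu_op f xs = None" unfolding mu_op_def by (simp only: if_False)
    then show False using assms by simp
  qed
  then have "mu_op f xs = Some (LEAST n. ?P n)" unfolding mu_op_def by (simp only: if_True)
  then have nd: "n = (LEAST n. ?P n)" using assms by (simp only: option.inject)
  have P: "?P n" using LeastI_ex[OF ex] unfolding nd[symmetric] .
  have "\<exists>w. f (m # xs) = Some (Suc w)" if "m < n" for m
  proof -
    have "f (m # xs) \<noteq> None" using P that by auto
    moreover have "f (m # xs) \<noteq> Some 0"
    proof
      assume "f (m # xs) = Some 0"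
      then have "?P m" using P that by auto
      then have "n \<le> m" using Least_le[of ?P m] unfolding nd[symmetric] by blast
      then show False using that by simp
    qed
    ultimately obtain w where "f (m # xs) = Some w" "w \<noteq> 0" by auto
    then show ?thesis by (cases w) auto
  qed
  then show ?thesis using P by blast
qed

lemma use_principle:
  "eval p Q xs = Some v \<Longrightarrow> \<exists>l. \<forall>Q'. (\<forall>y<l. Q' y = Q y) \<longrightarrow> eval p Q' xs = Some v"
proof (induction p arbitrary: xs v)
  case Zer then show ?case by auto
next
  case Sc then show ?case by auto
next
  case (Prj i) then show ?case by auto
next
  case Orc
  show ?case
    by (rule exI[of _ "Suc (hd xs)"]) (use Orc in auto)
next
  case (Cmp g fs)
  have all: "\<forall>f\<in>set fs. eval f Q xs \<noteq> None" and gv: "eval g Q (map (\<lambda>f. the (eval f Q xs)) fs) = Some v"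
    using Cmp.prems by (auto split: if_splits)
  have "\<forall>f\<in>set fs. \<exists>l. \<forall>Q'. (\<forall>y<l. Q' y = Q y) \<longrightarrow> eval f Q' xs = eval f Q xs"
    using Cmp.IH(2) all by fastforce
  then obtain L where L: "\<And>f Q'. f \<in> set fs \<Longrightarrow> (\<forall>y<L f. Q' y = Q y) \<Longrightarrow> eval f Q' xs = eval f Q xs"
    by metis
  obtain lg where lg: "\<And>Q'. (\<forall>y<lg. Q' y = Q y) \<Longrightarrow> eval g Q' (map (\<lambda>f. the (eval f Q xs)) fs) = Some v"
    using Cmp.IH(1)[OF gv] by blast
  define l where "l = lg + sum_list (map L fs)"
  have Lle: "f \<in> set fs \<Longrightarrow> L f \<le> l" for f
    unfolding l_def using member_le_sum_list[of "L f" "map L fs"] by auto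
  show ?case
  proof (intro exI allI impI)
    fix Q' assume ag: "\<forall>y<l. Q' y = Q y"
    have e: "f \<in> set fs \<Longrightarrow> eval f Q' xs = eval f Q xs" for f
      using L[of f Q'] ag Lle[of f] by auto
    then have mq: "map (\<lambda>f. the (eval f Q' xs)) fs = map (\<lambda>f. the (eval f Q xs)) fs" by auto
    have gv': "eval g Q' (map (\<lambda>f. the (eval f Q xs)) fs) = Some v"
      using lg ag unfolding l_def by auto
    have all': "\<forall>f\<in>set fs. eval f Q' xs \<noteq> None" using all e by auto
    show "eval (Cmp g fs) Q' xs = Some v" by (subst eval.simps) (simp only: if_P[OF all'] mq gv')
  qed
next
  case (PR g h)
  have gen: "prec_aux (eval g Q) (eval h Q) n ys = Some r \<Longrightarrow>
      \<exists>l. \<forall>Q'. (\<forall>y<l. Q' y = Q y) \<longrightarrow> prec_aux (eval g Q') (eval h Q') n ys = Some r" for n ys r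
  proof (induction n arbitrary: r)
    case 0 then show ?case using PR.IH(1) by simp
  next
    case (Suc n)
    then obtain r0 where r0: "prec_aux (eval g Q) (eval h Q) n ys = Some r0" "eval h Q (n # r0 # ys) = Some r"
      by (auto split: option.splits)
    obtain l1 where l1: "\<And>Q'. (\<forall>y<l1. Q' y = Q y) \<Longrightarrow> prec_aux (eval g Q') (eval h Q') n ys = Some r0"
      using Suc.IH[OF r0(1)] by blast
    obtain l2 where l2: "\<And>Q'. (\<forall>y<l2. Q' y = Q y) \<Longrightarrow> eval h Q' (n # r0 # ys) = Some r"
      using PR.IH(2)[OF r0(2)] by blast
    show ?case by (rule exI[of _ "l1 + l2"]) (auto simp: l1 l2)
  qed
  show ?case using gen PR.prems by simp
next
  case (Mu f)
  have mv: "f' (v # xs) = Some 0 \<and> (\<forall>m<v. \<exists>w. f' (m # xs) = Some (Suc w))" if "f' = eval f Q" for f'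
    using mu_op_elim[of "eval f Q" xs v] Mu.prems that by simp
  have "\<forall>m\<le>v. \<exists>l. \<forall>Q'. (\<forall>y<l. Q' y = Q y) \<longrightarrow> eval f Q' (m # xs) = eval f Q (m # xs)"
  proof (intro allI impI)
    fix m assume "m \<le> v"
    then obtain w where "eval f Q (m # xs) = Some w" using mv[OF refl]
      by (cases "m = v") (auto simp: order_le_less)
    then show "\<exists>l. \<forall>Q'. (\<forall>y<l. Q' y = Q y) \<longrightarrow> eval f Q' (m # xs) = eval f Q (m # xs)"
      using Mu.IH by metis
  qed
  then obtain L where L: "\<And>m Q'. m \<le> v \<Longrightarrow> (\<forall>y<L m. Q' y = Q y) \<Longrightarrow> eval f Q' (m # xs) = eval f Q (m # xs)"
    by metis
  define l where "l = (\<Sum>m\<le>v. L m)"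
  have Lle: "m \<le> v \<Longrightarrow> L m \<le> l" for m
    unfolding l_def by (rule member_le_sum) auto
  show ?case
  proof (intro exI allI impI)
    fix Q' assume ag: "\<forall>y<l. Q' y = Q y"
    have e: "m \<le> v \<Longrightarrow> eval f Q' (m # xs) = eval f Q (m # xs)" for m
      using L[of m Q'] ag Lle[of m] by auto
    have "mu_op (eval f Q') xs = Some v"
      using mv[OF refl] e by (intro mu_op_intro) auto
    then show "eval (Mu f) Q' xs = Some v" by simp
  qed
qed



lemma tot_nths: "tot X m g \<Longrightarrow> length is = m \<Longrightarrow> (\<forall>i\<in>set is. i < k) \<Longrightarrow>
   tot X k (\<lambda>ys. g (map (\<lambda>i. ys ! i) is))"
  by (rule tot_comp_list[where fs="map (\<lambda>i ys. ys ! i) is"]) (auto intro: tot_proj simp: comp_def)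

lemma map_nth_upt_drop: "map (\<lambda>i. l ! i) [a..<length l] = drop a l"
  by (rule nth_equalityI) auto

lemma tot_prodlist: "(\<forall>f\<in>set fs. tot X k f) \<Longrightarrow> tot X k (\<lambda>xs. prod_list (map (\<lambda>f. f xs) fs))"
proof (induction fs)
  case Nil then show ?case by (simp add: tot_const)
next
  case (Cons f fs) then show ?case by (simp add: tot_mult)
qed

lemma list_choice: "\<forall>x\<in>set xs. \<exists>y. P x y \<Longrightarrow> \<exists>ys. length ys = length xs \<and> (\<forall>i<length xs. P (xs ! i) (ys ! i))"
proof (induction xs)
  case Nil then show ?case by simp
next
  case (Cons x xs)
  then obtain ys where "length ys = length xs" "\<forall>i<length xs. P (xs ! i) (ys ! i)" by auto
  moreover obtain y where "P x y" using Cons.prems by auto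
  ultimately show ?case by (intro exI[of _ "y # ys"]) (auto simp: nth_Cons split: nat.splits)
qed

definition clocks :: "(nat \<Rightarrow> nat \<Rightarrow> bool) \<Rightarrow> nat \<Rightarrow> prog \<Rightarrow> (nat list \<Rightarrow> nat) \<Rightarrow> bool" where
  "clocks Oe k p H \<longleftrightarrow>
    (\<forall>xs e t v. length xs = k \<longrightarrow> H (t # xs @ [e]) = Suc v \<longrightarrow> eval p (Oe e) xs = Some v) \<and>
    (\<forall>xs e v. length xs = k \<longrightarrow> eval p (Oe e) xs = Some v \<longrightarrow> (\<exists>t0. \<forall>t\<ge>t0. H (t # xs @ [e]) = Suc v))"

lemma clocksI:
  assumes "\<And>xs e t v. length xs = k \<Longrightarrow> H (t # xs @ [e]) = Suc v \<Longrightarrow> eval p (Oe e) xs = Some v"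
    and "\<And>xs e v. length xs = k \<Longrightarrow> eval p (Oe e) xs = Some v \<Longrightarrow> (\<exists>t0. \<forall>t\<ge>t0. H (t # xs @ [e]) = Suc v)"
  shows "clocks Oe k p H"
  using assms unfolding clocks_def by blast

lemma clocksD1: "clocks Oe k p H \<Longrightarrow> length xs = k \<Longrightarrow> H (t # xs @ [e]) = Suc v \<Longrightarrow> eval p (Oe e) xs = Some v"
  unfolding clocks_def by blast
lemma clocksD2: "clocks Oe k p H \<Longrightarrow> length xs = k \<Longrightarrow> eval p (Oe e) xs = Some v \<Longrightarrow> \<exists>t0. \<forall>t\<ge>t0. H (t # xs @ [e]) = Suc v"
  unfolding clocks_def by blast

fun srch :: "(nat \<Rightarrow> nat) \<Rightarrow> nat \<Rightarrow> nat" where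
  "srch w 0 = 0"
| "srch w (Suc b) = (if srch w b = 0 then (if w b = 0 then 1 else if w b = 1 then b + 2 else 0) else srch w b)"

lemma srch_zero: "srch w b = 0 \<Longrightarrow> m < b \<Longrightarrow> w m \<ge> 2"
proof (induction b)
  case (Suc b)
  have "srch w b = 0" using Suc.prems(1) by (auto split: if_splits)
  moreover have "w b \<ge> 2" using Suc.prems(1) \<open>srch w b = 0\<close> by (auto split: if_splits)
  ultimately show ?case using Suc by (cases "m = b") auto
qed simp

lemma srch_zeroI: "(\<And>m. m < b \<Longrightarrow> w m \<ge> 2) \<Longrightarrow> srch w b = 0"
proof (induction b)
  case (Suc b)
  have "w b \<ge> 2" using Suc.prems by auto
  moreover have "srch w b = 0" using Suc by auto
  ultimately show ?case by simp
qed simp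

lemma srch_found: "srch w b = Suc (Suc n) \<Longrightarrow> n < b \<and> w n = 1 \<and> (\<forall>m<n. w m \<ge> 2)"
proof (induction b)
  case (Suc b)
  show ?case
  proof (cases "srch w b = 0")
    case True
    then have "n = b" "w b = 1" using Suc.prems by (auto split: if_splits)
    then show ?thesis using srch_zero[OF True] by auto
  next
    case False
    then show ?thesis using Suc by auto
  qed
qed simp

lemma srch_findI: "w n = 1 \<Longrightarrow> (\<And>m. m < n \<Longrightarrow> w m \<ge> 2) \<Longrightarrow> n < b \<Longrightarrow> srch w b = Suc (Suc n)"
proof (induction b)
  case (Suc b)
  show ?case
  proof (cases "n = b")
    case True
    have "srch w b = 0" using Suc.prems True by (intro srch_zeroI) auto
    then show ?thesis using Suc.prems True by simp
  next
    case False
    then show ?thesis using Suc by auto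
  qed
qed simp

context
  fixes C :: "nat set" and Oe :: "nat \<Rightarrow> nat \<Rightarrow> bool"
  assumes OF: "tot C 2 (\<lambda>xs. if Oe (xs!1) (xs!0) then 1 else 0)"
begin

lemma clock_Zer: "\<exists>H. tot C (Suc (Suc k)) H \<and> clocks Oe k Zer H"
  by (rule exI[of _ "\<lambda>_. 1"]) (auto intro: tot_const clocksI)

lemma clock_Sc: "\<exists>H. tot C (Suc (Suc (Suc 0))) H \<and> clocks Oe (Suc 0) Sc H"
proof (rule exI[of _ "\<lambda>ys. Suc (Suc (ys ! 1))"], intro conjI clocksI)
  show "tot C (Suc (Suc (Suc 0))) (\<lambda>ys. Suc (Suc (ys ! 1)))"
  proof -
    have "tot C (Suc (Suc (Suc 0))) (\<lambda>ys. 2 + ys ! 1)" by (rule tot_add[OF tot_const tot_proj]) simp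
    then show ?thesis by (rule tot_cong) simp
  qed
next
  fix xs :: "nat list" and e t v assume "length xs = Suc 0" "Suc (Suc ((t # xs @ [e]) ! 1)) = Suc v"
  then show "eval Sc (Oe e) xs = Some v" by (auto simp: length_Suc_conv)
next
  fix xs :: "nat list" and e v assume "length xs = Suc 0" "eval Sc (Oe e) xs = Some v"
  then show "\<exists>t0. \<forall>t\<ge>t0. Suc (Suc ((t # xs @ [e]) ! 1)) = Suc v" by (auto simp: length_Suc_conv)
qed

lemma clock_Prj: "i < k \<Longrightarrow> \<exists>H. tot C (Suc (Suc k)) H \<and> clocks Oe k (Prj i) H"
proof (rule exI[of _ "\<lambda>ys. Suc (ys ! Suc i)"], intro conjI clocksI)
  assume "i < k"
  then show "tot C (Suc (Suc k)) (\<lambda>ys. Suc (ys ! Suc i))"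
  proof -
    have "tot C (Suc (Suc k)) (\<lambda>ys. 1 + ys ! Suc i)" by (rule tot_add[OF tot_const tot_proj]) (use \<open>i < k\<close> in simp)
    then show ?thesis by (rule tot_cong) simp
  qed
next
  fix xs :: "nat list" and e t v assume "i < k" "length xs = k" "Suc ((t # xs @ [e]) ! Suc i) = Suc v"
  then show "eval (Prj i) (Oe e) xs = Some v" by (auto simp: nth_append)
next
  fix xs :: "nat list" and e v assume "i < k" "length xs = k" "eval (Prj i) (Oe e) xs = Some v"
  then show "\<exists>t0. \<forall>t\<ge>t0. Suc ((t # xs @ [e]) ! Suc i) = Suc v" by (auto simp: nth_append)
qed

lemma clock_Orc: "\<exists>H. tot C (Suc (Suc (Suc 0))) H \<and> clocks Oe (Suc 0) Orc H"
proof (rule exI[of _ "\<lambda>ys. Suc (if Oe (ys!2) (ys!1) then 1 else 0)"], intro conjI clocksI)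
  have "tot C 3 (\<lambda>ys. (\<lambda>xs. if Oe (xs!1) (xs!0) then 1 else 0) [ys!1, ys!2])"
    by (rule tot_comp2[OF OF]; rule tot_proj; simp)
  then have "tot C 3 (\<lambda>ys. 1 + (if Oe (ys!2) (ys!1) then 1 else 0))"
    by (intro tot_add tot_const) simp
  then show "tot C (Suc (Suc (Suc 0))) (\<lambda>ys. Suc (if Oe (ys!2) (ys!1) then 1 else 0))"
    by (simp add: numeral_3_eq_3)
next
  fix xs :: "nat list" and e t v assume "length xs = Suc 0" "Suc (if Oe ((t # xs @ [e]) ! 2) ((t # xs @ [e]) ! 1) then 1 else 0) = Suc v"
  then show "eval Orc (Oe e) xs = Some v" by (auto simp: length_Suc_conv numeral_2_eq_2)
next
  fix xs :: "nat list" and e v assume "length xs = Suc 0" "eval Orc (Oe e) xs = Some v"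
  then show "\<exists>t0. \<forall>t\<ge>t0. Suc (if Oe ((t # xs @ [e]) ! 2) ((t # xs @ [e]) ! 1) then 1 else 0) = Suc v"
    by (auto simp: length_Suc_conv numeral_2_eq_2)
qed


lemma clock_PR:
  assumes tg: "tot C (Suc (Suc k)) Hg" and cg: "clocks Oe k g Hg"
    and th: "tot C (Suc (Suc (Suc (Suc k)))) Hh" and ch: "clocks Oe (Suc (Suc k)) h Hh"
  shows "\<exists>H. tot C (Suc (Suc (Suc k))) H \<and> clocks Oe (Suc k) (PR g h) H"
proof -
  define g' where "g' = (\<lambda>ys::nat list. Hg (ys!0 # drop 2 ys))"
  define h' where "h' = (\<lambda>zs::nat list. if zs!1 = 0 then 0 else Hh (zs!2 # zs!0 # (zs!1 - 1) # drop 4 zs))"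
  define H where "H = (\<lambda>ys. nrec g' h' (ys!1) ys)"
  have tg': "tot C (Suc (Suc (Suc k))) g'"
  proof -
    have "tot C (Suc (Suc (Suc k))) (\<lambda>ys. Hg (map (\<lambda>i. ys ! i) (0 # [2..<Suc (Suc (Suc k))])))"
      by (rule tot_nths[OF tg]) auto
    then show ?thesis unfolding g'_def
    proof (rule tot_cong)
      fix ys :: "nat list" assume "length ys = Suc (Suc (Suc k))"
      then show "Hg (map (\<lambda>i. ys ! i) (0 # [2..<Suc (Suc (Suc k))])) = Hg (ys ! 0 # drop 2 ys)"
        using map_nth_upt_drop[of ys 2] by simp
    qed
  qed
  have th': "tot C (Suc (Suc (Suc (Suc (Suc k))))) h'"
  proof -
    let ?fs = "[\<lambda>zs::nat list. zs!2, \<lambda>zs. zs!0, \<lambda>zs. zs!1 - 1] @ map (\<lambda>i zs. zs ! i) [4..<Suc (Suc (Suc (Suc (Suc k))))]"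
    have a: "tot C (Suc (Suc (Suc (Suc (Suc k))))) (\<lambda>zs. Hh (map (\<lambda>f. f zs) ?fs))"
    proof (rule tot_comp[OF th])
      show "length ?fs = Suc (Suc (Suc (Suc k)))" by (simp add: eval_nat_numeral; arith)
      show "\<forall>f\<in>set ?fs. tot C (Suc (Suc (Suc (Suc (Suc k))))) f"
        by (auto intro!: tot_proj tot_monus tot_const)
    qed
    have "tot C (Suc (Suc (Suc (Suc (Suc k))))) (\<lambda>zs. if zs!1 = 0 then 0 else Hh (map (\<lambda>f. f zs) ?fs))"
      by (rule tot_ifz[OF tot_proj tot_const a]) simp
    then show ?thesis unfolding h'_def
    proof (rule tot_cong)
      fix zs :: "nat list" assume l: "length zs = Suc (Suc (Suc (Suc (Suc k))))"
      have "map (\<lambda>f. f zs) ?fs = zs!2 # zs!0 # (zs!1 - 1) # drop 4 zs"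
        using map_nth_upt_drop[of zs 4] l by (simp add: comp_def)
      then show "(if zs!1 = 0 then 0 else Hh (map (\<lambda>f. f zs) ?fs)) =
         (if zs!1 = 0 then 0 else Hh (zs!2 # zs!0 # (zs!1 - 1) # drop 4 zs))" by simp
    qed
  qed
  have tH: "tot C (Suc (Suc (Suc k))) H"
    unfolding H_def by (rule tot_rec_gen[OF tot_proj tg' th']) simp
  have r0: "nrec g' h' 0 (t # n # xs @ [e]) = Hg (t # xs @ [e])" for t n xs e
    by (simp add: g'_def)
  have rS: "nrec g' h' (Suc j) (t # n # xs @ [e]) = (if nrec g' h' j (t # n # xs @ [e]) = 0 then 0
      else Hh (t # j # (nrec g' h' j (t # n # xs @ [e]) - 1) # xs @ [e]))" for t n xs e j
    by (simp add: h'_def)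
  have sound: "length xs = k \<Longrightarrow> nrec g' h' j (t # n # xs @ [e]) = Suc v \<Longrightarrow>
      prec_aux (eval g (Oe e)) (eval h (Oe e)) j xs = Some v" for xs e t n j v
  proof (induction j arbitrary: v)
    case 0 then show ?case using clocksD1[OF cg] r0 by simp
  next
    case (Suc j)
    have e1: "(if nrec g' h' j (t # n # xs @ [e]) = 0 then 0
      else Hh (t # j # (nrec g' h' j (t # n # xs @ [e]) - 1) # xs @ [e])) = Suc v"
      using Suc.prems(2) unfolding rS .
    then obtain w where w: "nrec g' h' j (t # n # xs @ [e]) = Suc w"
      by (cases "nrec g' h' j (t # n # xs @ [e])") auto
    then have "Hh (t # (j # w # xs) @ [e]) = Suc v" using e1 by simp
    then have "eval h (Oe e) (j # w # xs) = Some v" using clocksD1[OF ch] Suc.prems(1) by simp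
    then show ?case using Suc.IH[OF Suc.prems(1) w] by simp
  qed
  have compl: "length xs = k \<Longrightarrow> prec_aux (eval g (Oe e)) (eval h (Oe e)) j xs = Some v \<Longrightarrow>
      \<exists>t0. \<forall>t\<ge>t0. nrec g' h' j (t # n # xs @ [e]) = Suc v" for xs e n j v
  proof (induction j arbitrary: v)
    case 0 then show ?case using clocksD2[OF cg] r0 by simp
  next
    case (Suc j)
    then obtain w where w: "prec_aux (eval g (Oe e)) (eval h (Oe e)) j xs = Some w"
        "eval h (Oe e) (j # w # xs) = Some v"
      by (auto split: option.splits)
    obtain t1 where t1: "\<And>t. t \<ge> t1 \<Longrightarrow> nrec g' h' j (t # n # xs @ [e]) = Suc w"
      using Suc.IH[OF Suc.prems(1) w(1)] by blast
    obtain t2 where t2: "\<And>t. t \<ge> t2 \<Longrightarrow> Hh (t # j # w # xs @ [e]) = Suc v"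
      using clocksD2[OF ch _ w(2)] Suc.prems by fastforce
    show ?case by (rule exI[of _ "t1 + t2"]) (auto simp: rS t1 t2 simp del: nrec.simps)
  qed
  show ?thesis
  proof (rule exI[of _ H], rule conjI[OF tH], rule clocksI)
    fix xs :: "nat list" and e t v assume l: "length xs = Suc k" and h: "H (t # xs @ [e]) = Suc v"
    then obtain n xs' where xs: "xs = n # xs'" "length xs' = k" by (cases xs) auto
    show "eval (PR g h) (Oe e) xs = Some v" using sound[OF xs(2)] h unfolding H_def xs by simp
  next
    fix xs :: "nat list" and e v assume l: "length xs = Suc k" and h: "eval (PR g h) (Oe e) xs = Some v"
    then obtain n xs' where xs: "xs = n # xs'" "length xs' = k" by (cases xs) auto
    show "\<exists>t0. \<forall>t\<ge>t0. H (t # xs @ [e]) = Suc v" using compl[OF xs(2)] h unfolding H_def xs by simp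
  qed
qed


lemma clock_Mu:
  assumes tf: "tot C (Suc (Suc (Suc k))) Hf" and cf: "clocks Oe (Suc k) f Hf"
  shows "\<exists>H. tot C (Suc (Suc k)) H \<and> clocks Oe k (Mu f) H"
proof -
  define V where "V = (\<lambda>zs::nat list. Hf (zs!2 # zs!0 # drop 3 zs))"
  define h' where "h' = (\<lambda>zs::nat list. if zs!1 = 0 then (if V zs = 0 then 1 else if V zs - 1 = 0 then zs!0 + 2 else 0) else zs!1)"
  define H where "H = (\<lambda>ys. nrec (\<lambda>_. 0) h' (ys!0) ys - 1)"
  have tV: "tot C (Suc (Suc (Suc (Suc k)))) V"
  proof -
    have "tot C (Suc (Suc (Suc (Suc k)))) (\<lambda>ys. Hf (map (\<lambda>i. ys ! i) (2 # 0 # [3..<Suc (Suc (Suc (Suc k)))])))"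
      by (rule tot_nths[OF tf]) auto
    then show ?thesis unfolding V_def
    proof (rule tot_cong)
      fix ys :: "nat list" assume "length ys = Suc (Suc (Suc (Suc k)))"
      then show "Hf (map (\<lambda>i. ys ! i) (2 # 0 # [3..<Suc (Suc (Suc (Suc k)))])) = Hf (ys!2 # ys ! 0 # drop 3 ys)"
        using map_nth_upt_drop[of ys 3] by simp
    qed
  qed
  have th': "tot C (Suc (Suc (Suc (Suc k)))) h'"
    unfolding h'_def
    by (intro tot_ifz tot_proj tot_const tV tot_monus tot_add) simp_all
  have tH: "tot C (Suc (Suc k)) H"
    unfolding H_def by (intro tot_monus tot_const tot_rec_gen[OF tot_proj tot_const th']) simp
  have S: "nrec (\<lambda>_. 0) h' b (t # xs @ [e]) = srch (\<lambda>m. Hf (t # m # xs @ [e])) b" for b t xs e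
    by (induction b) (auto simp: h'_def V_def)
  show ?thesis
  proof (rule exI[of _ H], rule conjI[OF tH], rule clocksI)
    fix xs :: "nat list" and e t v assume l: "length xs = k" and hv: "H (t # xs @ [e]) = Suc v"
    let ?w = "\<lambda>m. Hf (t # m # xs @ [e])"
    have "srch ?w t = Suc (Suc v)" using hv unfolding H_def S by simp
    note fd0 = srch_found[OF this]
    have fd: "v < t" "?w v = 1" "\<And>m. m < v \<Longrightarrow> ?w m \<ge> 2" using fd0 by simp_all
    have "eval f (Oe e) (v # xs) = Some 0" using clocksD1[OF cf, of "v # xs" t e 0] fd(2) l by simp
    moreover have "\<exists>w. eval f (Oe e) (m # xs) = Some (Suc w)" if mv: "m < v" for m
    proof -
      have "?w m \<ge> 2" using fd(3)[OF mv] .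
      then obtain u where "?w m = Suc (Suc u)" using le_Suc_ex[of 2 "?w m"] by auto
      then show ?thesis using clocksD1[OF cf, of "m # xs" t e "Suc u"] l by auto
    qed
    ultimately have "mu_op (eval f (Oe e)) xs = Some v" by (rule mu_op_intro)
    then show "eval (Mu f) (Oe e) xs = Some v" by simp
  next
    fix xs :: "nat list" and e v assume l: "length xs = k" and ev: "eval (Mu f) (Oe e) xs = Some v"
    let ?w = "\<lambda>t m. Hf (t # m # xs @ [e])"
    have me: "eval f (Oe e) (v # xs) = Some 0 \<and> (\<forall>m<v. \<exists>w. eval f (Oe e) (m # xs) = Some (Suc w))"
      using mu_op_elim[of "eval f (Oe e)" xs v] ev by simp
    have "\<forall>m\<le>v. \<exists>t0. \<exists>u. \<forall>t\<ge>t0. ?w t m = Suc u \<and> (m = v \<longrightarrow> u = 0) \<and> (m < v \<longrightarrow> u \<noteq> 0)"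
    proof (intro allI impI)
      fix m assume "m \<le> v"
      have "\<exists>u. eval f (Oe e) (m # xs) = Some u \<and> (m = v \<longrightarrow> u = 0) \<and> (m < v \<longrightarrow> u \<noteq> 0)"
      proof (cases "m = v")
        case True then show ?thesis using me by simp
      next
        case False then have "m < v" using \<open>m \<le> v\<close> by simp
        then obtain w where "eval f (Oe e) (m # xs) = Some (Suc w)" using me by blast
        then show ?thesis using \<open>m < v\<close> by simp
      qed
      then obtain u where u: "eval f (Oe e) (m # xs) = Some u" "m = v \<longrightarrow> u = 0" "m < v \<longrightarrow> u \<noteq> 0"
        by blast
      obtain t0 where "\<forall>t\<ge>t0. Hf (t # (m # xs) @ [e]) = Suc u" using clocksD2[OF cf _ u(1)] l by auto
      then show "\<exists>t0 u. \<forall>t\<ge>t0. ?w t m = Suc u \<and> (m = v \<longrightarrow> u = 0) \<and> (m < v \<longrightarrow> u \<noteq> 0)"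
        using u(2,3) by auto
    qed
    then have "\<exists>T U. \<forall>m\<le>v. \<forall>t\<ge>T m. ?w t m = Suc (U m) \<and> (m = v \<longrightarrow> U m = 0) \<and> (m < v \<longrightarrow> U m \<noteq> 0)"
      by (subst (asm) choice_iff') (subst (asm) choice_iff', blast)
    then obtain T U where TU: "\<And>m t. m \<le> v \<Longrightarrow> t \<ge> T m \<Longrightarrow> ?w t m = Suc (U m) \<and> (m = v \<longrightarrow> U m = 0) \<and> (m < v \<longrightarrow> U m \<noteq> 0)"
      by blast
    define t0 where "t0 = Suc v + (\<Sum>m\<le>v. T m)"
    have Tle: "m \<le> v \<Longrightarrow> T m \<le> t0" for m
      unfolding t0_def using member_le_sum[of m "{..v}" T] by auto
    show "\<exists>t0. \<forall>t\<ge>t0. H (t # xs @ [e]) = Suc v"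
    proof (intro exI allI impI)
      fix t assume tt: "t0 \<le> t"
      have "srch (?w t) t = Suc (Suc v)"
      proof (rule srch_findI)
        show "?w t v = 1" using TU[of v t] Tle[of v] tt by auto
        show "?w t m \<ge> 2" if "m < v" for m using TU[of m t] Tle[of m] tt that by auto
        show "v < t" using tt unfolding t0_def by auto
      qed
      then show "H (t # xs @ [e]) = Suc v" unfolding H_def S by simp
    qed
  qed
qed

end


lemma prod01_zero: "(prod_list (map (\<lambda>x. if P x then (0::nat) else 1) l) = 0) \<longleftrightarrow> (\<exists>x\<in>set l. P x)"
  by (induction l) auto

context
  fixes C :: "nat set" and Oe :: "nat \<Rightarrow> nat \<Rightarrow> bool"
  assumes OF: "tot C 2 (\<lambda>xs. if Oe (xs!1) (xs!0) then 1 else 0)"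
begin

lemma clock_Cmp:
  assumes tg: "tot C (Suc (Suc m)) Hg" and cg: "clocks Oe m g Hg"
    and lfs: "length fs = m" and lHs: "length Hs = m"
    and tH: "\<And>i. i < m \<Longrightarrow> tot C (Suc (Suc k)) (Hs ! i)"
    and cH: "\<And>i. i < m \<Longrightarrow> clocks Oe k (fs ! i) (Hs ! i)"
  shows "\<exists>H. tot C (Suc (Suc k)) H \<and> clocks Oe k (Cmp g fs) H"
proof -
  define H where "H = (\<lambda>ys. if prod_list (map (\<lambda>Hf. if Hf ys = 0 then (0::nat) else 1) Hs) = 0 then 0
     else Hg (ys!0 # map (\<lambda>Hf. Hf ys - 1) Hs @ [ys ! Suc k]))"
  have tHs: "\<forall>Hf\<in>set Hs. tot C (Suc (Suc k)) Hf" using tH lHs by (auto simp: in_set_conv_nth)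
  have tc: "tot C (Suc (Suc k)) (\<lambda>ys. prod_list (map (\<lambda>Hf. if Hf ys = 0 then (0::nat) else 1) Hs))"
  proof -
    have "tot C (Suc (Suc k)) (\<lambda>ys. prod_list (map (\<lambda>f. f ys) (map (\<lambda>Hf ys. if Hf ys = 0 then (0::nat) else 1) Hs)))"
      by (rule tot_prodlist) (use tHs in \<open>auto intro: tot_sg\<close>)
    then show ?thesis by (simp add: comp_def)
  qed
  let ?fs = "(\<lambda>ys::nat list. ys!0) # map (\<lambda>Hf ys. Hf ys - 1) Hs @ [\<lambda>ys. ys ! Suc k]"
  have tb: "tot C (Suc (Suc k)) (\<lambda>ys. Hg (map (\<lambda>f. f ys) ?fs))"
  proof (rule tot_comp[OF tg])
    show "length ?fs = Suc (Suc m)" using lHs by simp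
    show "\<forall>f\<in>set ?fs. tot C (Suc (Suc k)) f" using tHs by (auto intro: tot_proj tot_monus tot_const)
  qed
  have tHH: "tot C (Suc (Suc k)) H"
  proof -
    have "tot C (Suc (Suc k)) (\<lambda>ys. if prod_list (map (\<lambda>Hf. if Hf ys = 0 then (0::nat) else 1) Hs) = 0 then 0
       else Hg (map (\<lambda>f. f ys) ?fs))"
      by (rule tot_ifz[OF tc tot_const tb])
    then show ?thesis unfolding H_def by (rule tot_cong) (simp add: comp_def)
  qed
  show ?thesis
  proof (rule exI[of _ H], rule conjI[OF tHH], rule clocksI)
    fix xs :: "nat list" and e t v assume l: "length xs = k" and hv: "H (t # xs @ [e]) = Suc v"
    let ?ys = "t # xs @ [e]"
    have nz: "\<forall>Hf\<in>set Hs. Hf ?ys \<noteq> 0" using hv unfolding H_def by (auto simp: prod01_zero split: if_splits)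
    let ?vals = "map (\<lambda>Hf. Hf ?ys - 1) Hs"
    have hg: "Hg (t # ?vals @ [e]) = Suc v" using hv nz l unfolding H_def by (auto simp: prod01_zero nth_append split: if_splits)
    have eg: "eval g (Oe e) ?vals = Some v" using clocksD1[OF cg _ hg] lHs by simp
    have ef: "eval (fs ! i) (Oe e) xs = Some (?vals ! i)" if "i < m" for i
    proof -
      have "(Hs ! i) ?ys \<noteq> 0" using nz that lHs by auto
      then have "(Hs ! i) ?ys = Suc (?vals ! i)" using that lHs by auto
      then show ?thesis using clocksD1[OF cH[OF that] l] by blast
    qed
    have all: "\<forall>f\<in>set fs. eval f (Oe e) xs \<noteq> None" using ef lfs by (auto simp: in_set_conv_nth)
    have mp: "map (\<lambda>f. the (eval f (Oe e) xs)) fs = ?vals"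
      by (rule nth_equalityI) (use lfs lHs ef in auto)
    show "eval (Cmp g fs) (Oe e) xs = Some v" by (subst eval.simps) (simp only: if_P[OF all] mp eg)
  next
    fix xs :: "nat list" and e v assume l: "length xs = k" and ev: "eval (Cmp g fs) (Oe e) xs = Some v"
    have all: "\<forall>f\<in>set fs. eval f (Oe e) xs \<noteq> None" using ev by (auto split: if_splits)
    let ?vals = "map (\<lambda>f. the (eval f (Oe e) xs)) fs"
    have eg: "eval g (Oe e) ?vals = Some v" using ev all by simp
    obtain tg0 where tg0: "\<And>t. t \<ge> tg0 \<Longrightarrow> Hg (t # ?vals @ [e]) = Suc v" using clocksD2[OF cg _ eg] lfs by auto
    have "\<forall>i<m. \<exists>t0. \<forall>t\<ge>t0. (Hs ! i) (t # xs @ [e]) = Suc (?vals ! i)"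
    proof (intro allI impI)
      fix i assume i: "i < m"
      have "fs ! i \<in> set fs" using i lfs by simp
      then obtain y where "eval (fs ! i) (Oe e) xs = Some y" using all by blast
      then have "eval (fs ! i) (Oe e) xs = Some (?vals ! i)" using i lfs by simp
      then show "\<exists>t0. \<forall>t\<ge>t0. (Hs ! i) (t # xs @ [e]) = Suc (?vals ! i)" using clocksD2[OF cH[OF i] l] by blast
    qed
    then obtain T where T: "\<And>i t. i < m \<Longrightarrow> t \<ge> T i \<Longrightarrow> (Hs ! i) (t # xs @ [e]) = Suc (?vals ! i)"
      by (subst (asm) choice_iff') blast
    define t0 where "t0 = tg0 + (\<Sum>i<m. T i)"
    have Tle: "i < m \<Longrightarrow> T i \<le> t0" for i unfolding t0_def using member_le_sum[of i "{..<m}" T] by auto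
    show "\<exists>t0. \<forall>t\<ge>t0. H (t # xs @ [e]) = Suc v"
    proof (intro exI allI impI)
      fix t assume tt: "t0 \<le> t"
      let ?ys = "t # xs @ [e]"
      have Hi: "i < m \<Longrightarrow> (Hs ! i) ?ys = Suc (?vals ! i)" for i using T[of i t] Tle[of i] tt by auto
      have nz: "\<not> (\<exists>Hf\<in>set Hs. Hf ?ys = 0)" using Hi lHs by (auto simp: in_set_conv_nth)
      have mv: "map (\<lambda>Hf. Hf ?ys - 1) Hs = ?vals"
        by (rule nth_equalityI) (use lfs lHs Hi in auto)
      have "Hg (t # ?vals @ [e]) = Suc v" using tg0 tt unfolding t0_def by auto
      then show "H ?ys = Suc v" unfolding H_def using nz mv l
        by (simp add: prod01_zero nth_append)
    qed
  qed
qed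

lemma clock: "pwf k p \<Longrightarrow> \<exists>H. tot C (Suc (Suc k)) H \<and> clocks Oe k p H"
proof (induction rule: pwf.induct)
  case (1 k) then show ?case using clock_Zer[OF OF] by blast
next
  case 2 then show ?case using clock_Sc[OF OF] by blast
next
  case (3 i k) then show ?case using clock_Prj[OF OF] by blast
next
  case 4 then show ?case using clock_Orc[OF OF] by blast
next
  case (5 m g fs k)
  obtain Hg where Hg: "tot C (Suc (Suc m)) Hg" "clocks Oe m g Hg" using 5 by blast
  have "\<forall>f\<in>set fs. \<exists>H. tot C (Suc (Suc k)) H \<and> clocks Oe k f H" using 5 by blast
  from list_choice[OF this] obtain Hs where Hs: "length Hs = length fs"
    "\<forall>i<length fs. tot C (Suc (Suc k)) (Hs ! i) \<and> clocks Oe k (fs ! i) (Hs ! i)" by blast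
  have lm: "length fs = m" using 5 by blast
  show ?case by (rule clock_Cmp[OF Hg(1) Hg(2) lm]) (use Hs lm in auto)
next
  case (6 k g h)
  then show ?case using clock_PR[OF OF] by blast
next
  case (7 k f)
  then show ?case using clock_Mu[OF OF] by blast
qed

end


lemma mu_op_total: "(\<And>n. q (n # xs) \<noteq> None) \<Longrightarrow> mu_op q xs \<noteq> None \<longleftrightarrow> (\<exists>n. q (n # xs) = Some 0)"
proof
  assume "mu_op q xs \<noteq> None"
  then obtain n where "mu_op q xs = Some n" by auto
  then show "\<exists>n. q (n # xs) = Some 0" using mu_op_elim by blast
next
  assume tot: "\<And>n. q (n # xs) \<noteq> None" and "\<exists>n. q (n # xs) = Some 0"
  then have "\<exists>n. q (n # xs) = Some 0 \<and> (\<forall>m<n. q (m # xs) \<noteq> None)" by blast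
  then show "mu_op q xs \<noteq> None" unfolding mu_op_def by (simp only: if_True) simp
qed

lemma nrec_sum: "nrec (\<lambda>_. 0) (\<lambda>zs. zs!1 + (if H [zs!2, zs!3, zs!0] = 0 then 0 else 1)) n ys =
   (\<Sum>e<n. if H [ys!0, ys!1, e] = 0 then 0 else 1)"
  by (induction n) auto

lemma ce_exists:
  assumes OF: "tot C 2 (\<lambda>xs. if Oe (xs!1) (xs!0) then 1 else 0)" and wp: "pwf (Suc 0) p"
  shows "ce_in C {c. \<exists>e. eval p (Oe e) [c] \<noteq> None}"
proof -
  obtain H where tH: "tot C (Suc (Suc (Suc 0))) H" and cH: "clocks Oe (Suc 0) p H"
    using clock[OF OF wp] by blast
  define Sm where "Sm = (\<lambda>ys::nat list. \<Sum>e<Suc (ys!0). if H [ys!0, ys!1, e] = 0 then (0::nat) else 1)"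
  have tS: "tot C 2 Sm"
  proof -
    have th: "tot C 4 (\<lambda>zs. zs!1 + (if H [zs!2, zs!3, zs!0] = 0 then 0 else 1))"
    proof (intro tot_add tot_proj tot_sg)
      show "tot C 4 (\<lambda>zs. H [zs!2, zs!3, zs!0])"
        by (rule tot_comp_list[where fs="[\<lambda>zs. zs!2, \<lambda>zs. zs!3, \<lambda>zs. zs!0]", OF tH]) (auto intro: tot_proj)
    qed simp
    have "tot C 2 (\<lambda>ys. nrec (\<lambda>_. 0) (\<lambda>zs. zs!1 + (if H [zs!2, zs!3, zs!0] = 0 then 0 else 1)) (Suc (ys!0)) ys)"
    proof (rule tot_rec_gen[OF _ tot_const])
      have "tot C 2 (\<lambda>xs. 1 + xs ! 0)" by (rule tot_add[OF tot_const tot_proj]) simp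
      then show "tot C 2 (\<lambda>xs. Suc (xs ! 0))" by (rule tot_cong) simp
      show "tot C (Suc (Suc 2)) (\<lambda>zs. zs!1 + (if H [zs!2, zs!3, zs!0] = 0 then 0 else 1))"
        using th by (simp add: numeral_eq_Suc)
    qed
    then show ?thesis unfolding Sm_def by (rule tot_cong) (simp only: nrec_sum)
  qed
  have tQ: "tot C 2 (\<lambda>ys. 1 - Sm ys)" by (intro tot_monus tot_const tS)
  then obtain q where q: "recfn C 2 q" "\<And>ys. length ys = 2 \<Longrightarrow> q ys = Some (1 - Sm ys)"
    unfolding tot_def rf_def by blast
  have rq: "recfn C 1 (mu_op q)" using recfn.mu[of C 1 q] q(1) by (simp add: numeral_2_eq_2)
  show ?thesis unfolding ce_in_def
  proof (intro exI conjI allI, rule rq)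
    fix c
    have qt: "\<And>n. q (n # [c]) \<noteq> None" using q(2) by simp
    have "mu_op q [c] \<noteq> None \<longleftrightarrow> (\<exists>z. Sm [z, c] \<noteq> 0)"
      unfolding mu_op_total[of q "[c]", OF qt] using q(2) by (auto simp: Suc_le_eq)
    also have "\<dots> \<longleftrightarrow> (\<exists>e. eval p (Oe e) [c] \<noteq> None)"
    proof
      assume "\<exists>z. Sm [z, c] \<noteq> 0"
      then obtain z e where "H [z, c, e] \<noteq> 0" unfolding Sm_def by (auto split: if_splits)
      then obtain v where "H (z # [c] @ [e]) = Suc v" by (cases "H [z, c, e]") auto
      then have "eval p (Oe e) [c] = Some v" using clocksD1[OF cH] by simp
      then show "\<exists>e. eval p (Oe e) [c] \<noteq> None" by blast
    next
      assume "\<exists>e. eval p (Oe e) [c] \<noteq> None"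
      then obtain e v where "eval p (Oe e) [c] = Some v" by blast
      then have "\<exists>t0. \<forall>t\<ge>t0. H (t # [c] @ [e]) = Suc v" using clocksD2[OF cH, of "[c]"] by simp
      then obtain t0 where t0: "\<And>t. t \<ge> t0 \<Longrightarrow> H (t # [c] @ [e]) = Suc v" by blast
      have "H [t0 + e, c, e] \<noteq> 0" using t0[of "t0 + e"] by simp
      then have "Sm [t0 + e, c] \<noteq> 0" unfolding Sm_def
        by (subst sum_nonneg_eq_0_iff) auto
      then show "\<exists>z. Sm [z, c] \<noteq> 0" by blast
    qed
    finally show "c \<in> {c. \<exists>e. eval p (Oe e) [c] \<noteq> None} \<longleftrightarrow> mu_op q [c] \<noteq> None" by simp
  qed
qed



instance prog :: countable by countable_datatype

definition cset :: "nat set \<Rightarrow> nat set \<Rightarrow> bool" where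
  "cset C X \<longleftrightarrow> tot C 1 (\<lambda>xs. if xs ! 0 \<in> X then 1 else 0)"

definition oF :: "nat set \<Rightarrow> nat set \<Rightarrow> nat set \<Rightarrow> nat \<Rightarrow> nat \<Rightarrow> bool" where
  "oF C F X e y = (if even y then y div 2 \<in> F \<union> (set_decode e \<inter> X) else y div 2 \<in> C)"

lemma join_iff: "y \<in> join G C \<longleftrightarrow> (if even y then y div 2 \<in> G else y div 2 \<in> C)"
  unfolding join_def by (auto elim: evenE oddE)

lemma cset_tot: "cset C X \<Longrightarrow> tot C k f \<Longrightarrow> tot C k (\<lambda>xs. if f xs \<in> X then 1 else 0)"
  unfolding cset_def using tot_unop[where op="\<lambda>x. if x \<in> X then 1 else 0"] by simp

lemma tot_oF:
  assumes F: "finite F" and X: "cset C X"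
  shows "tot C 2 (\<lambda>xs. if oF C F X (xs!1) (xs!0) then 1 else 0)"
proof -
  let ?x = "\<lambda>xs::nat list. xs ! 0 div 2"
  have tx: "tot C 2 ?x" by (intro tot_div2 tot_proj) simp
  have t1: "tot C 2 (\<lambda>xs. if ?x xs \<in> set_decode (set_encode F) then 1 else 0)" by (intro tot_bit tx tot_const)
  have t2: "tot C 2 (\<lambda>xs. if ?x xs \<in> set_decode (xs!1) then 1 else 0)" by (intro tot_bit tx tot_proj) simp
  have t3: "tot C 2 (\<lambda>xs. if ?x xs \<in> X then 1 else 0)" by (rule cset_tot[OF X tx])
  have t4: "tot C 2 (\<lambda>xs. if ?x xs \<in> C then 1 else 0)"
    using tot_unop[where op="\<lambda>x. if x \<in> C then 1 else 0", OF tot_orac1 tx] by simp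
  have "tot C 2 (\<lambda>xs. if xs!0 mod 2 = 0 then
      (if (if ?x xs \<in> set_decode (set_encode F) then 1 else (0::nat)) + (if ?x xs \<in> set_decode (xs!1) then 1 else 0) * (if ?x xs \<in> X then 1 else 0) = 0 then 0 else 1)
      else (if ?x xs \<in> C then 1 else 0))"
  proof (rule tot_ifz[OF tot_mod2[OF tot_proj] _ t4])
    show "tot C 2 (\<lambda>xs. if (if ?x xs \<in> set_decode (set_encode F) then 1 else (0::nat)) + (if ?x xs \<in> set_decode (xs!1) then 1 else 0) * (if ?x xs \<in> X then 1 else 0) = 0 then 0 else 1)"
      by (rule tot_sg[OF tot_add[OF t1 tot_mult[OF t2 t3]]])
  qed simp
  then show ?thesis by (rule tot_cong) (auto simp: oF_def F)
qed

lemma cset_Int: "cset C X \<Longrightarrow> cset C Y \<Longrightarrow> cset C (X \<inter> Y)"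
  unfolding cset_def
proof -
  assume a: "tot C 1 (\<lambda>xs. if xs ! 0 \<in> X then 1 else 0)" "tot C 1 (\<lambda>xs. if xs ! 0 \<in> Y then 1 else 0)"
  have "tot C 1 (\<lambda>xs. (if xs ! 0 \<in> X then 1 else 0) * (if xs ! 0 \<in> Y then 1 else 0))" by (rule tot_mult[OF a])
  then show "tot C 1 (\<lambda>xs. if xs ! 0 \<in> X \<inter> Y then 1 else 0)" by (rule tot_cong) auto
qed

lemma cset_Compl: "cset C Y \<Longrightarrow> cset C (- Y)"
  unfolding cset_def
proof -
  assume a: "tot C 1 (\<lambda>xs. if xs ! 0 \<in> Y then 1 else 0)"
  have "tot C 1 (\<lambda>xs. 1 - (if xs ! 0 \<in> Y then 1 else 0))" by (rule tot_monus[OF tot_const a])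
  then show "tot C 1 (\<lambda>xs. if xs ! 0 \<in> - Y then 1 else 0)" by (rule tot_cong) auto
qed

lemma cset_UNIV: "cset C UNIV"
  unfolding cset_def using tot_const[of C 1 1] by simp

lemma cset_gt: "cset C {x. b < x}"
  unfolding cset_def
proof -
  have "tot C 1 (\<lambda>xs. if xs ! 0 - b = 0 then 0 else 1)" by (intro tot_sg tot_monus tot_proj tot_const) simp
  then show "tot C 1 (\<lambda>xs. if xs ! 0 \<in> {x. b < x} then 1 else 0)" by (rule tot_cong) auto
qed

lemma cset_R: assumes "unif_computable C R" shows "cset C (R i)"
proof -
  obtain f where f: "recfn C 2 f" "\<And>i x. f [i, x] = Some (if x \<in> R i then 1 else 0)"
    using assms unfolding unif_computable_def by blast
  have "tot C 2 (\<lambda>xs. if xs ! 1 \<in> R (xs ! 0) then 1 else 0)"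
    unfolding tot_def rf_def
  proof (intro exI conjI allI impI, rule f(1))
    fix xs :: "nat list" assume "length xs = 2"
    then obtain a b where "xs = [a, b]" by (auto simp: numeral_2_eq_2 length_Suc_conv)
    then show "f xs = Some (if xs ! 1 \<in> R (xs ! 0) then 1 else 0)" using f(2) by simp
  qed
  then have "tot C 1 (\<lambda>xs. (\<lambda>ys. if ys ! 1 \<in> R (ys ! 0) then 1 else 0) [i, xs ! 0])"
    by (rule tot_comp2[OF _ tot_const tot_proj]) simp
  then show ?thesis unfolding cset_def by simp
qed

definition good :: "nat set \<Rightarrow> nat set \<times> nat set \<Rightarrow> bool" where
  "good C FX \<longleftrightarrow> finite (fst FX) \<and> infinite (snd FX) \<and> (\<forall>a\<in>fst FX. \<forall>x\<in>snd FX. a < x) \<and> cset C (snd FX)"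

definition ext :: "nat set \<Rightarrow> nat set \<Rightarrow> nat set \<Rightarrow> prog \<Rightarrow> nat \<Rightarrow> nat set \<times> nat set" where
  "ext C F X p c = (let e = (SOME e. eval p (oF C F X e) [c] \<noteq> None);
      v = the (eval p (oF C F X e) [c]);
      l = (SOME l. \<forall>Q'. (\<forall>y<l. Q' y = oF C F X e y) \<longrightarrow> eval p Q' [c] = Some v);
      D = F \<union> (set_decode e \<inter> X);
      b = l + Suc (Max (insert 0 D))
    in (D, {x \<in> X. b < x}))"

lemma ext_prop:
  assumes g: "good C (F, X)" and ex: "\<exists>e. eval p (oF C F X e) [c] \<noteq> None"
    and r: "ext C F X p c = (D, X')"
  shows "good C (D, X') \<and> F \<subseteq> D \<and> D \<subseteq> F \<union> X \<and> X' \<subseteq> X \<and>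
     (\<forall>G. D \<subseteq> G \<longrightarrow> G \<subseteq> D \<union> X' \<longrightarrow> eval p (\<lambda>y. y \<in> join G C) [c] \<noteq> None)"
proof -
  define e where "e = (SOME e. eval p (oF C F X e) [c] \<noteq> None)"
  have e: "eval p (oF C F X e) [c] \<noteq> None" unfolding e_def using someI_ex[OF ex] .
  define v where "v = the (eval p (oF C F X e) [c])"
  have v: "eval p (oF C F X e) [c] = Some v" using e unfolding v_def by auto
  define l where "l = (SOME l. \<forall>Q'. (\<forall>y<l. Q' y = oF C F X e y) \<longrightarrow> eval p Q' [c] = Some v)"
  have l: "\<forall>Q'. (\<forall>y<l. Q' y = oF C F X e y) \<longrightarrow> eval p Q' [c] = Some v"
    unfolding l_def using someI_ex[OF use_principle[OF v]] .
  define b where "b = l + Suc (Max (insert 0 (F \<union> (set_decode e \<inter> X))))"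
  have DX: "D = F \<union> (set_decode e \<inter> X)" "X' = {x \<in> X. b < x}"
    using r unfolding ext_def Let_def e_def[symmetric] v_def[symmetric] l_def[symmetric] b_def[symmetric] by auto
  have fF: "finite F" "infinite X" "cset C X" "\<forall>a\<in>F. \<forall>x\<in>X. a < x" using g unfolding good_def by auto
  have fD: "finite D" using DX fF by simp
  have Dlt: "a \<in> D \<Longrightarrow> a < b" for a
  proof -
    assume "a \<in> D"
    then have "a \<le> Max (insert 0 D)" using fD by simp
    then show "a < b" unfolding b_def DX(1)[symmetric] by simp
  qed
  have gd: "good C (D, X')"
    unfolding good_def
  proof (intro conjI)
    show "finite (fst (D, X'))" using fD by simp
    have "X' = X - {..b}" using DX by auto
    then show "infinite (snd (D, X'))" using fF by simp
    show "\<forall>a\<in>fst (D, X'). \<forall>x\<in>snd (D, X'). a < x" using Dlt DX by fastforce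
    have "X' = X \<inter> {x. b < x}" using DX by auto
    then show "cset C (snd (D, X'))" using cset_Int[OF fF(3) cset_gt] by simp
  qed
  have main: "eval p (\<lambda>y. y \<in> join G C) [c] \<noteq> None" if G: "D \<subseteq> G" "G \<subseteq> D \<union> X'" for G
  proof -
    have agree: "x < b \<Longrightarrow> x \<in> G \<longleftrightarrow> x \<in> D" for x using G DX by auto
    have "\<forall>y<l. (y \<in> join G C) = oF C F X e y"
    proof (intro allI impI)
      fix y assume y: "y < l"
      have "y div 2 < b" using y unfolding b_def by linarith
      then show "(y \<in> join G C) = oF C F X e y"
        unfolding join_iff oF_def using agree[of "y div 2"] DX(1) by simp
    qed
    then show ?thesis using l by auto
  qed
  show ?thesis using gd main DX fF by auto
qed



definition mat :: "str list list \<Rightarrow> nat \<Rightarrow> nat \<Rightarrow> str" where "mat L i j = L ! i ! j"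

definition reqP :: "nat set \<Rightarrow> nat \<Rightarrow> str set \<Rightarrow> str set \<Rightarrow> nat set \<times> nat set \<Rightarrow> nat \<Rightarrow> prog \<Rightarrow> str list list \<Rightarrow> (nat \<Rightarrow> nat \<Rightarrow> str set) \<Rightarrow> bool" where
  "reqP C n A0 A1 FX m p L V \<longleftrightarrow> is_valuation m (2^n*m) (mat L) V \<and> diagonalizes m (2^n*m) V A0 A1 \<and>
      (\<exists>e. eval p (oF C (fst FX) (snd FX) e) [val_code m (2^n*m) V] \<noteq> None)"

definition reqstep :: "nat set \<Rightarrow> nat \<Rightarrow> str set \<Rightarrow> str set \<Rightarrow> nat set \<times> nat set \<Rightarrow> nat \<times> prog \<times> str list list \<Rightarrow> nat set \<times> nat set" where
  "reqstep C n A0 A1 FX r = (case r of (m, p, L) \<Rightarrow>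
     (if \<exists>V. reqP C n A0 A1 FX m p L V
      then ext C (fst FX) (snd FX) p (val_code m (2^n*m) (SOME V. reqP C n A0 A1 FX m p L V)) else FX))"

definition cohstep :: "(nat \<Rightarrow> nat set) \<Rightarrow> nat \<Rightarrow> nat set \<times> nat set \<Rightarrow> nat set \<times> nat set" where
  "cohstep R s FX = (fst FX, if infinite (snd FX \<inter> R s) then snd FX \<inter> R s else snd FX \<inter> - R s)"

definition grow :: "nat set \<times> nat set \<Rightarrow> nat set \<times> nat set" where
  "grow FX = (insert (LEAST x. x \<in> snd FX) (fst FX), {x \<in> snd FX. (LEAST x. x \<in> snd FX) < x})"

fun cond :: "nat set \<Rightarrow> (nat \<Rightarrow> nat set) \<Rightarrow> nat \<Rightarrow> str set \<Rightarrow> str set \<Rightarrow> nat \<Rightarrow> nat set \<times> nat set" where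
  "cond C R n A0 A1 0 = ({}, UNIV)"
| "cond C R n A0 A1 (Suc s) = grow (cohstep R s (reqstep C n A0 A1 (cond C R n A0 A1 s) (from_nat s)))"

lemma good_init: "good C ({}, UNIV)"
  unfolding good_def using cset_UNIV by auto

lemma reqstep_prop:
  assumes g: "good C FX"
  shows "good C (reqstep C n A0 A1 FX r) \<and> fst FX \<subseteq> fst (reqstep C n A0 A1 FX r) \<and>
    fst (reqstep C n A0 A1 FX r) \<subseteq> fst FX \<union> snd FX \<and> snd (reqstep C n A0 A1 FX r) \<subseteq> snd FX"
proof -
  obtain m p L where r: "r = (m, p, L)" by (cases r) auto
  show ?thesis
  proof (cases "\<exists>V. reqP C n A0 A1 FX m p L V")
    case True
    let ?V = "SOME V. reqP C n A0 A1 FX m p L V"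
    have "reqP C n A0 A1 FX m p L ?V" using someI_ex[OF True] .
    then have ex: "\<exists>e. eval p (oF C (fst FX) (snd FX) e) [val_code m (2^n*m) ?V] \<noteq> None" unfolding reqP_def by blast
    obtain D X' where dx: "ext C (fst FX) (snd FX) p (val_code m (2^n*m) ?V) = (D, X')" by fastforce
    have g': "good C (fst FX, snd FX)" using g by simp
    have "reqstep C n A0 A1 FX r = (D, X')" unfolding reqstep_def r using True dx by simp
    then show ?thesis using ext_prop[OF g' ex dx] by simp
  next
    case False
    have "reqstep C n A0 A1 FX r = FX" unfolding reqstep_def r by (simp only: prod.case if_not_P[OF False])
    then show ?thesis using g by simp
  qed
qed

lemma cohstep_prop:
  assumes g: "good C FX" and R: "unif_computable C R"
  shows "good C (cohstep R s FX) \<and> fst (cohstep R s FX) = fst FX \<and> snd (cohstep R s FX) \<subseteq> snd FX \<and>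
    (snd (cohstep R s FX) \<subseteq> R s \<or> snd (cohstep R s FX) \<subseteq> - R s)"
proof -
  have gg: "finite (fst FX)" "infinite (snd FX)" "\<forall>a\<in>fst FX. \<forall>x\<in>snd FX. a < x" "cset C (snd FX)"
    using g unfolding good_def by auto
  have inf: "infinite (if infinite (snd FX \<inter> R s) then snd FX \<inter> R s else snd FX \<inter> - R s)"
  proof (cases "infinite (snd FX \<inter> R s)")
    case False
    have "snd FX = (snd FX \<inter> R s) \<union> (snd FX \<inter> - R s)" by auto
    then have "infinite (snd FX \<inter> - R s)" using False gg(2) by (metis finite_UnI)
    then show ?thesis using False by simp
  qed simp
  have cs: "cset C (if infinite (snd FX \<inter> R s) then snd FX \<inter> R s else snd FX \<inter> - R s)"
    using cset_Int[OF gg(4) cset_R[OF R]] cset_Int[OF gg(4) cset_Compl[OF cset_R[OF R]]] by simp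
  show ?thesis unfolding cohstep_def good_def using gg inf cs by auto
qed

lemma grow_prop:
  assumes g: "good C FX"
  shows "good C (grow FX) \<and> fst FX \<subseteq> fst (grow FX) \<and> card (fst (grow FX)) = Suc (card (fst FX)) \<and>
    fst (grow FX) \<subseteq> fst FX \<union> snd FX \<and> snd (grow FX) \<subseteq> snd FX"
proof -
  have gg: "finite (fst FX)" "infinite (snd FX)" "\<forall>a\<in>fst FX. \<forall>x\<in>snd FX. a < x" "cset C (snd FX)"
    using g unfolding good_def by auto
  define a where "a = (LEAST x. x \<in> snd FX)"
  have ne: "snd FX \<noteq> {}" using gg(2) by auto
  have aX: "a \<in> snd FX" unfolding a_def using ne by (auto intro: LeastI)
  have aF: "a \<notin> fst FX" using gg(3) aX by auto
  have eq: "{x \<in> snd FX. a < x} = snd FX - {..a}" by auto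
  have gd: "good C (insert a (fst FX), {x \<in> snd FX. a < x})"
    unfolding good_def
  proof (intro conjI)
    show "finite (fst (insert a (fst FX), {x \<in> snd FX. a < x}))" using gg by simp
    show "infinite (snd (insert a (fst FX), {x \<in> snd FX. a < x}))" using gg(2) eq by simp
    show "\<forall>b\<in>fst (insert a (fst FX), {x \<in> snd FX. a < x}). \<forall>x\<in>snd (insert a (fst FX), {x \<in> snd FX. a < x}). b < x"
      using gg(3) by auto
    have "{x \<in> snd FX. a < x} = snd FX \<inter> {x. a < x}" by auto
    then show "cset C (snd (insert a (fst FX), {x \<in> snd FX. a < x}))" using cset_Int[OF gg(4) cset_gt] by simp
  qed
  show ?thesis unfolding grow_def a_def[symmetric] using gd aF aX gg(1) by auto
qed



lemma is_valuation_cong: "(\<And>i j. i < m \<Longrightarrow> j < N \<Longrightarrow> M i j = M' i j) \<Longrightarrow> is_valuation m N M V = is_valuation m N M' V"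
  unfolding is_valuation_def by auto

lemma disjoint_cong: "(\<And>i j. i < m \<Longrightarrow> j < N \<Longrightarrow> M i j = M' i j) \<Longrightarrow> disjoint_matrix m N M = disjoint_matrix m N M'"
  unfolding disjoint_matrix_def by auto

context
  fixes C :: "nat set" and R :: "nat \<Rightarrow> nat set" and n :: nat and A0 A1 :: "str set"
  assumes R: "unif_computable C R"
begin

abbreviation "cd s \<equiv> cond C R n A0 A1 s"
abbreviation "FX1 s \<equiv> reqstep C n A0 A1 (cd s) (from_nat s)"
abbreviation "FX2 s \<equiv> cohstep R s (FX1 s)"

lemma good_cond: "good C (cd s)"
proof (induction s)
  case 0 then show ?case using good_init by simp
next
  case (Suc s)
  have "good C (FX1 s)" using reqstep_prop[OF Suc] by blast
  then have "good C (FX2 s)" using cohstep_prop[OF _ R] by blast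
  then show ?case using grow_prop by simp
qed

lemma step_props:
  shows "fst (cd s) \<subseteq> fst (FX1 s)" "fst (FX1 s) \<subseteq> fst (cd s) \<union> snd (cd s)" "snd (FX1 s) \<subseteq> snd (cd s)"
    "fst (FX1 s) \<subseteq> fst (cd (Suc s))" "fst (cd (Suc s)) \<subseteq> fst (FX1 s) \<union> snd (FX1 s)"
    "snd (cd (Suc s)) \<subseteq> snd (FX2 s)" "snd (FX2 s) \<subseteq> snd (FX1 s)"
    "snd (FX2 s) \<subseteq> R s \<or> snd (FX2 s) \<subseteq> - R s"
    "card (fst (cd (Suc s))) = Suc (card (fst (FX2 s)))" "fst (FX2 s) = fst (FX1 s)"
    "finite (fst (FX1 s))"
proof -
  have g: "good C (cd s)" by (rule good_cond)
  note r = reqstep_prop[OF g, of n A0 A1 "from_nat s"]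
  have g1: "good C (FX1 s)" using r by blast
  note c = cohstep_prop[OF g1 R, of s]
  have g2: "good C (FX2 s)" using c by blast
  note gr = grow_prop[OF g2]
  have cs: "cd (Suc s) = grow (FX2 s)" by simp
  show "fst (cd s) \<subseteq> fst (FX1 s)" "fst (FX1 s) \<subseteq> fst (cd s) \<union> snd (cd s)" "snd (FX1 s) \<subseteq> snd (cd s)"
    using r by blast+
  show "fst (FX1 s) \<subseteq> fst (cd (Suc s))" using cs c gr by simp
  show "fst (cd (Suc s)) \<subseteq> fst (FX1 s) \<union> snd (FX1 s)" using cs c gr by auto
  show "snd (cd (Suc s)) \<subseteq> snd (FX2 s)" using cs gr by simp
  show "snd (FX2 s) \<subseteq> snd (FX1 s)" "snd (FX2 s) \<subseteq> R s \<or> snd (FX2 s) \<subseteq> - R s" "fst (FX2 s) = fst (FX1 s)"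
    using c by blast+
  show "card (fst (cd (Suc s))) = Suc (card (fst (FX2 s)))" using cs gr by simp
  show "finite (fst (FX1 s))" using g1 unfolding good_def by simp
qed

abbreviation "Fs s \<equiv> fst (cd s)"
abbreviation "Xs s \<equiv> snd (cd s)"

lemma step1: "Fs s \<subseteq> Fs (Suc s)" "Xs (Suc s) \<subseteq> Xs s" "Fs (Suc s) \<subseteq> Fs s \<union> Xs s" "card (Fs (Suc s)) \<ge> Suc (card (Fs s))"
proof -
  note sp = step_props[of s]
  show "Fs s \<subseteq> Fs (Suc s)" using sp by blast
  show "Xs (Suc s) \<subseteq> Xs s" using sp by blast
  show "Fs (Suc s) \<subseteq> Fs s \<union> Xs s" using sp by blast
  have "card (Fs s) \<le> card (fst (FX2 s))" using sp by (simp add: card_mono)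
  then show "card (Fs (Suc s)) \<ge> Suc (card (Fs s))" using sp by simp
qed

lemma chain: "s \<le> t \<Longrightarrow> Fs s \<subseteq> Fs t \<and> Xs t \<subseteq> Xs s \<and> Fs t \<subseteq> Fs s \<union> Xs s"
proof (induction t rule: dec_induct)
  case base then show ?case by simp
next
  case (step t)
  then show ?case using step1[of t] by blast
qed

definition "GG = (\<Union>s. Fs s)"

lemma G_sub: "GG \<subseteq> Fs s \<union> Xs s"
proof
  fix x assume "x \<in> GG"
  then obtain t where t: "x \<in> Fs t" unfolding GG_def by blast
  show "x \<in> Fs s \<union> Xs s"
  proof (cases "t \<le> s")
    case True then show ?thesis using chain[OF True] t by blast
  next
    case False then show ?thesis using chain[of s t] t by auto
  qed
qed

lemma F_sub: "Fs s \<subseteq> GG" unfolding GG_def by blast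

lemma card_F: "card (Fs s) \<ge> s"
proof (induction s)
  case (Suc s) then show ?case using step1(4)[of s] by simp
qed simp

lemma G_inf: "infinite GG"
proof
  assume fin: "finite GG"
  have "card (Fs (Suc (card GG))) \<le> card GG" using card_mono[OF fin F_sub] .
  then show False using card_F[of "Suc (card GG)"] by simp
qed

lemma G_coh: "cohesive R GG"
  unfolding cohesive_def
proof (intro conjI allI G_inf)
  fix i
  note sp = step_props[of i]
  have Gs: "GG \<subseteq> Fs (Suc i) \<union> snd (FX2 i)" using G_sub[of "Suc i"] sp by blast
  have fin: "finite (Fs (Suc i))" using good_cond[of "Suc i"] unfolding good_def by simp
  show "finite (GG - R i) \<or> finite (GG - - R i)"
  proof (cases "snd (FX2 i) \<subseteq> R i")
    case True
    then have "GG - R i \<subseteq> Fs (Suc i)" using Gs by blast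
    then show ?thesis using fin finite_subset by blast
  next
    case False
    then have "snd (FX2 i) \<subseteq> - R i" using sp by blast
    then have "GG - - R i \<subseteq> Fs (Suc i)" using Gs by blast
    then show ?thesis using fin finite_subset by blast
  qed
qed


lemma G_fair:
  assumes fairC: "fair n C A0 A1"
  shows "fair n (join GG C) A0 A1"
  unfolding fair_def
proof (intro allI impI)
  fix m :: nat and \<phi> :: "(nat \<Rightarrow> nat \<Rightarrow> str set) \<Rightarrow> bool" and M :: "nat \<Rightarrow> nat \<Rightarrow> str"
  let ?N = "2 ^ n * m"
  assume sig: "sigma1_formula (join GG C) m ?N \<phi>" and dis: "disjoint_matrix m ?N M" and ess: "essential m ?N \<phi> M"
  obtain W where W: "ce_in (join GG C) W" "\<And>V. (\<forall>i<m. \<forall>j<?N. finite (V i j)) \<Longrightarrow> \<phi> V \<longleftrightarrow> val_code m ?N V \<in> W"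
    using sig unfolding sigma1_formula_def by blast
  obtain f where f: "recfn (join GG C) 1 f" "\<And>x. x \<in> W \<longleftrightarrow> f [x] \<noteq> None" using W(1) unfolding ce_in_def by blast
  obtain p where p: "pwf 1 p" "f = eval p (\<lambda>y. y \<in> join GG C)" using recfn_prog[OF f(1)] by blast
  define L where "L = map (\<lambda>i. map (M i) [0..<?N]) [0..<m]"
  have MLeq: "\<And>i j. i < m \<Longrightarrow> j < ?N \<Longrightarrow> mat L i j = M i j" unfolding L_def mat_def by simp
  define s where "s = to_nat (m, p, L)"
  have fs: "from_nat s = (m, p, L)" unfolding s_def by simp
  define F where "F = Fs s"
  define X where "X = Xs s"
  have gFX: "good C (F, X)" using good_cond[of s] unfolding F_def X_def by simp
  then have gF: "finite F" "cset C X" "\<forall>a\<in>F. \<forall>x\<in>X. a < x" unfolding good_def by auto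
  define W' where "W' = {c. \<exists>e. eval p (oF C F X e) [c] \<noteq> None}"
  have ceW': "ce_in C W'" unfolding W'_def by (rule ce_exists[OF tot_oF[OF gF(1,2)]]) (use p(1) in simp)
  define \<psi> where "\<psi> = (\<lambda>V. val_code m ?N V \<in> W')"
  have sig\<psi>: "sigma1_formula C m ?N \<psi>" unfolding sigma1_formula_def \<psi>_def using ceW' by blast
  have disL: "disjoint_matrix m ?N (mat L)" using dis disjoint_cong[of m ?N "mat L" M] MLeq by simp
  have GFX: "GG \<subseteq> F \<union> X" "F \<subseteq> GG" unfolding F_def X_def using G_sub F_sub by auto
  have essL: "essential m ?N \<psi> (mat L)"
    unfolding essential_def
  proof
    fix s0
    obtain V where V: "is_valuation m ?N M V" "val_gt m ?N V s0" "\<phi> V" using ess unfolding essential_def by blast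
    have fin: "\<forall>i<m. \<forall>j<?N. finite (V i j)" using V(1) unfolding is_valuation_def by blast
    have "val_code m ?N V \<in> W" using W(2)[OF fin] V(3) by simp
    then obtain v where v: "eval p (\<lambda>y. y \<in> join GG C) [val_code m ?N V] = Some v" using f(2) p(2) by auto
    obtain l where l: "\<And>Q'. (\<forall>y<l. Q' y = (y \<in> join GG C)) \<Longrightarrow> eval p Q' [val_code m ?N V] = Some v"
      using use_principle[OF v] by blast
    define b where "b = l + Suc (Max (insert 0 F))"
    define D where "D = GG \<inter> {..<b}"
    have fD: "finite D" unfolding D_def by simp
    have Fb: "a \<in> F \<Longrightarrow> a < b" for a using gF(1) unfolding b_def
      by (metis Max_ge finite_insert insertI2 le_imp_less_Suc less_add_same_cancel2 add_strict_increasing2 zero_le)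
    have "\<forall>y<l. oF C F X (set_encode D) y = (y \<in> join GG C)"
    proof (intro allI impI)
      fix y assume y: "y < l"
      have xb: "y div 2 < b" using y unfolding b_def by linarith
      have "y div 2 \<in> F \<union> (D \<inter> X) \<longleftrightarrow> y div 2 \<in> GG"
        using GFX xb Fb unfolding D_def by blast
      then show "oF C F X (set_encode D) y = (y \<in> join GG C)"
        unfolding oF_def join_iff using fD by simp
    qed
    then have "eval p (oF C F X (set_encode D)) [val_code m ?N V] = Some v" using l by simp
    then have "\<psi> V" unfolding \<psi>_def W'_def by blast
    moreover have "is_valuation m ?N (mat L) V" using V(1) is_valuation_cong[of m ?N "mat L" M] MLeq by simp
    ultimately show "\<exists>V. is_valuation m ?N (mat L) V \<and> val_gt m ?N V s0 \<and> \<psi> V" using V(2) by blast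
  qed
  obtain V where V: "is_valuation m ?N (mat L) V" "diagonalizes m ?N V A0 A1" "\<psi> V"
    using fairC sig\<psi> disL essL unfolding fair_def by blast
  have cdFX: "cd s = (F, X)" unfolding F_def X_def by simp
  have exP: "\<exists>V. reqP C n A0 A1 (cd s) m p L V"
    using V unfolding reqP_def cdFX \<psi>_def W'_def by auto
  define V0 where "V0 = (SOME V. reqP C n A0 A1 (cd s) m p L V)"
  have V0: "reqP C n A0 A1 (cd s) m p L V0" unfolding V0_def using someI_ex[OF exP] .
  have r1: "FX1 s = ext C F X p (val_code m ?N V0)"
    unfolding reqstep_def fs V0_def cdFX using exP[unfolded cdFX] by simp
  obtain D X' where DX: "ext C F X p (val_code m ?N V0) = (D, X')" by fastforce
  have ex0: "\<exists>e. eval p (oF C F X e) [val_code m ?N V0] \<noteq> None" using V0 unfolding reqP_def cdFX by simp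
  note ep = ext_prop[OF gFX ex0 DX]
  note sp = step_props[of s]
  have "D \<subseteq> GG" using sp(4) F_sub[of "Suc s"] r1 DX by auto
  moreover have "GG \<subseteq> D \<union> X'" using G_sub[of "Suc s"] sp(5,6,7) r1 DX by auto
  ultimately have "eval p (\<lambda>y. y \<in> join GG C) [val_code m ?N V0] \<noteq> None" using ep by blast
  then have "val_code m ?N V0 \<in> W" using f(2) p(2) by simp
  moreover have fin0: "\<forall>i<m. \<forall>j<?N. finite (V0 i j)" using V0 unfolding reqP_def is_valuation_def by blast
  ultimately have "\<phi> V0" using W(2) by blast
  moreover have "is_valuation m ?N M V0" using V0 is_valuation_cong[of m ?N "mat L" M] MLeq unfolding reqP_def by simp
  moreover have "diagonalizes m ?N V0 A0 A1" using V0 unfolding reqP_def by simp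
  ultimately show "\<exists>V. is_valuation m ?N M V \<and> diagonalizes m ?N V A0 A1 \<and> \<phi> V" by blast
qed

end

theorem mainTheorem8:
  fixes n :: nat and A0 A1 :: "bool list set" and C :: "nat set" and R :: "nat \<Rightarrow> nat set"
  assumes "n \<ge> 1"
    and "fair n C A0 A1"
    and "unif_computable C R"
  shows "\<exists>G. cohesive R G \<and> fair n (join G C) A0 A1"
  using G_coh[OF assms(3)] G_fair[OF assms(3) assms(2)] by blast


end
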